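(* Consider the unit-cost Correlated Pandora's Problem (all $c_i=1$) in which all volumes are positive even integers. Let $x$ be an optimal solution of the Unit-Cost Convex Program. Sample $k\in[0,4]$ with probability density $\frac{e^k}{e^4-1}$, and then run $k$-Delayed Activation with (Discrete-Time) Poisson Rounding built from $x$. The expected objective of this randomized algorithm is at most $\frac{4e^4}{e^4-1}\cdot\mathrm{OPT}\approx 4.075\cdot\mathrm{OPT}$.
   Context: Correlated Pandora's Problem: boxes $[n]$, box $i$ has opening cost $c_i$ (here $c_i=1$) and volume $v_i$; the scenario $v=(v_1,\dots,v_n)$ is drawn from a known, possibly correlated distribution $\mathcal{D}$. Opening box $i$ costs $c_i$ and reveals $v_i$; an algorithm repeatedly opens another box or stops and takes an opened box of minimum volume (if all are opened it takes the minimum); the objective is total opening cost plus taken volume, minimized in expectation. A partially adaptive algorithm fixes the opening order in advance and adaptively decides when to stop; $\mathrm{OPT}$ is the minimum expected objective of a partially adaptive algorithm. Write $x_+=\max\{x,0\}$. Unit-Cost Convex Program: variables $x_i(t)\ge 0$ for $i,t\in[n]$ with $\sum_{i\in[n]}x_i(t)\le 1$ for all $t\in[n]$; minimize $\mathbf{E}_{v\sim\mathcal{D}}\sum_{t=1}^\infty\big(1-\sum_{i\in[n]}\sum_{t'\in[n],\,t'<t-v_i}x_i(t')\big)_+$. Discrete-Time Poisson Rounding: let $\bar x_i(t)=\frac1t\sum_{t'=1}^{\min\{t,n\}}x_i(t')$ for positive integers $t$. Independently at each step $\tau=1,2,\dots$, sample box $i$ with probability $\bar x_i(\lceil\tau/2\rceil)$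 (and no box with the remaining probability). The arrival time $\alpha_i$ of box $i$ is the first step at which it is sampled ($\infty$ if never). All arrival times are sampled in advance. $k$-Delayed Activation: open the boxes one per unit time step in ascending order of $\alpha_i$; stop after time step $\min_i(\alpha_i+\lfloor kv_i\rfloor)$ (or when all boxes are opened) and take the opened box of minimum volume; the objective is the number of boxes opened plus the taken volume. *)

theory Defs
  imports "HOL-Probability.Probability"
begin

text \<open>Boxes are indexed by 0..<n; time steps of the convex program by 1..n.
  A scenario is a function v :: nat => nat (only v i for i < n matters);
  the distribution D is a discrete distribution (pmf) on scenarios.\<close>

text \<open>A partially adaptive algorithm: a fixed order sigma (a bijection of 0..<n) and a
  stopping rule that, given the list of volumes observed so far (in opening order),
  decides whether to stop.\<close>

definition pa_stop_time :: "nat \<Rightarrow> (nat \<Rightarrow> nat) \<Rightarrow> (nat list \<Rightarrow> bool) \<Rightarrow> (nat \<Rightarrow> nat) \<Rightarrow> nat" where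
  "pa_stop_time n \<sigma> stop v =
     (LEAST t. 1 \<le> t \<and> (stop (map (\<lambda>j. v (\<sigma> j)) [0..<t]) \<or> t = n))"

definition pa_cost :: "nat \<Rightarrow> (nat \<Rightarrow> nat) \<Rightarrow> (nat list \<Rightarrow> bool) \<Rightarrow> (nat \<Rightarrow> nat) \<Rightarrow> nat" where
  "pa_cost n \<sigma> stop v =
     pa_stop_time n \<sigma> stop v + Min ((\<lambda>j. v (\<sigma> j)) ` {..<pa_stop_time n \<sigma> stop v})"

definition OPT :: "nat \<Rightarrow> (nat \<Rightarrow> nat) pmf \<Rightarrow> ennreal" where
  "OPT n D = (INF p \<in> {(\<sigma>, stop). bij_betw \<sigma> {..<n} {..<n}}.
                 \<integral>\<^sup>+ v. ennreal (real (pa_cost n (fst p) (snd p) v)) \<partial>measure_pmf D)"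

definition cp_feasible :: "nat \<Rightarrow> (nat \<Rightarrow> nat \<Rightarrow> real) \<Rightarrow> bool" where
  "cp_feasible n x \<longleftrightarrow>
     (\<forall>i<n. \<forall>t\<in>{1..n}. 0 \<le> x i t) \<and> (\<forall>t\<in>{1..n}. (\<Sum>i<n. x i t) \<le> 1)"

definition cp_obj :: "nat \<Rightarrow> (nat \<Rightarrow> nat) pmf \<Rightarrow> (nat \<Rightarrow> nat \<Rightarrow> real) \<Rightarrow> ennreal" where
  "cp_obj n D x =
     (\<integral>\<^sup>+ v. (\<Sum>s. (let t = Suc s in
        ennreal (max 0 (1 - (\<Sum>i<n. \<Sum>t'\<in>{t'\<in>{1..n}. real t' < real t - real (v i)}. x i t')))))
      \<partial>measure_pmf D)"

definition cp_optimal :: "nat \<Rightarrow> (nat \<Rightarrow> nat) pmf \<Rightarrow> (nat \<Rightarrow> nat \<Rightarrow> real) \<Rightarrow> bool" where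
  "cp_optimal n D x \<longleftrightarrow> cp_feasible n x \<and> (\<forall>y. cp_feasible n y \<longrightarrow> cp_obj n D x \<le> cp_obj n D y)"

definition xbar :: "nat \<Rightarrow> (nat \<Rightarrow> nat \<Rightarrow> real) \<Rightarrow> nat \<Rightarrow> nat \<Rightarrow> real" where
  "xbar n x i t = (1 / real t) * (\<Sum>t'\<in>{1..min t n}. x i t')"

text \<open>Distribution of the draw at step tau (tau >= 1): Some i with probability
  xbar_i(ceil(tau/2)), None with the remaining probability. (Note ceil(tau/2) = (tau+1) div 2;
  step 0 is a dummy step that yields None with probability 1 and is ignored.)\<close>
definition draw_pmf :: "nat \<Rightarrow> (nat \<Rightarrow> nat \<Rightarrow> real) \<Rightarrow> nat \<Rightarrow> nat option pmf" where
  "draw_pmf n x \<tau> = embed_pmf (\<lambda>d. case d of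
       None \<Rightarrow> 1 - (\<Sum>i<n. xbar n x i ((\<tau> + 1) div 2))
     | Some i \<Rightarrow> (if i < n then xbar n x i ((\<tau> + 1) div 2) else 0))"

definition poisson_space :: "nat \<Rightarrow> (nat \<Rightarrow> nat \<Rightarrow> real) \<Rightarrow> (nat \<Rightarrow> nat option) measure" where
  "poisson_space n x = PiM UNIV (\<lambda>\<tau>. measure_pmf (draw_pmf n x \<tau>))"

definition arrival :: "(nat \<Rightarrow> nat option) \<Rightarrow> nat \<Rightarrow> enat" where
  "arrival \<omega> i = (if \<exists>\<tau>\<ge>1. \<omega> \<tau> = Some i
                   then enat (LEAST \<tau>. 1 \<le> \<tau> \<and> \<omega> \<tau> = Some i) else \<infinity>)"

text \<open>Boxes are opened in ascending order of arrival time (ties, which can only occur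
  among boxes with infinite arrival time, broken by index).\<close>
definition da_cost :: "nat \<Rightarrow> real \<Rightarrow> (nat \<Rightarrow> enat) \<Rightarrow> (nat \<Rightarrow> nat) \<Rightarrow> nat" where
  "da_cost n k \<alpha> v =
    (let T = Min ((\<lambda>i. \<alpha> i + enat (nat \<lfloor>k * real (v i)\<rfloor>)) ` {..<n});
         m = (case T of enat t \<Rightarrow> min t n | \<infinity> \<Rightarrow> n);
         S = {i. i < n \<and> card {j. j < n \<and> (\<alpha> j < \<alpha> i \<or> (\<alpha> j = \<alpha> i \<and> j < i))} < m}
     in m + Min (v ` S))"

definition alg_value :: "nat \<Rightarrow> (nat \<Rightarrow> nat) pmf \<Rightarrow> (nat \<Rightarrow> nat \<Rightarrow> real) \<Rightarrow> ennreal" where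
  "alg_value n D x =
     (\<integral>\<^sup>+ k. indicator {0..4} k * ennreal (exp k / (exp 4 - 1)) *
        (\<integral>\<^sup>+ \<omega>. (\<integral>\<^sup>+ v. ennreal (real (da_cost n k (arrival \<omega>) v)) \<partial>measure_pmf D)
           \<partial>poisson_space n x) \<partial>lborel)"

end

theory Submission
  imports Defs
begin

definition psi :: "nat \<Rightarrow> nat \<Rightarrow> real" where
  "psi t' L = (\<Sum>\<tau>\<in>{\<tau>\<in>{1..L}. t' \<le> (\<tau>+1) div 2}. 1 / real ((\<tau>+1) div 2))"

lemma psi_nonneg: "0 \<le> psi t' L"
  unfolding psi_def by (intro sum_nonneg) auto

lemma psi_Suc: "psi t' (Suc L) = psi t' L + (if t' \<le> (L+2) div 2 then 1 / real ((L+2) div 2) else 0)"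
proof -
  have "{\<tau>\<in>{1..Suc L}. t' \<le> (\<tau>+1) div 2} =
        (if t' \<le> (L+2) div 2 then insert (Suc L) {\<tau>\<in>{1..L}. t' \<le> (\<tau>+1) div 2}
         else {\<tau>\<in>{1..L}. t' \<le> (\<tau>+1) div 2})"
    by (auto simp: le_Suc_eq)
  then show ?thesis unfolding psi_def by auto
qed

lemma psi_mono: "L \<le> L' \<Longrightarrow> psi t' L \<le> psi t' L'"
proof (induction L' rule: dec_induct)
  case (step m)
  have "psi t' m \<le> psi t' (Suc m)" by (simp add: psi_Suc)
  then show ?case using step by linarith
qed simp

lemma psi_even: "psi t' (2*q) = 2 * (\<Sum>u\<in>{t'..q}. 1 / real u)" if "1 \<le> t'"
proof (induction q)
  case 0
  then show ?case using that by (simp add: psi_def)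
next
  case (Suc q)
  have e: "2 * Suc q = Suc (Suc (2*q))" by simp
  have "psi t' (2 * Suc q) = psi t' (2*q) + 2 * (if t' \<le> Suc q then 1 / real (Suc q) else 0)"
    unfolding e psi_Suc by simp
  also have "\<dots> = 2 * (\<Sum>u\<in>{t'..Suc q}. 1 / real u)"
    using Suc by (auto simp: atLeastAtMostSuc_conv algebra_simps)
  finally show ?case .
qed

lemma harm_ln: "ln ((real q + 1) / real t') \<le> (\<Sum>u\<in>{t'..q}. 1 / real u)" if "1 \<le> t'"
proof (induction q)
  case 0
  then show ?case using that by (simp add: ln_div)
next
  case (Suc q)
  show ?case
  proof (cases "Suc q < t'")
    case True
    then have "(real (Suc q) + 1) / real t' \<le> 1" by simp
    then have "ln ((real (Suc q) + 1) / real t') \<le> 0" using that by (simp add: divide_le_eq_1)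
    moreover have "0 \<le> (\<Sum>u\<in>{t'..Suc q}. 1 / real u)" by (intro sum_nonneg) auto
    ultimately show ?thesis by linarith
  next
    case False
    have "ln ((real (Suc q) + 1) / real t') = ln ((real q + 1) / real t') + ln (1 + 1 / (real q + 1))"
      using that by (simp add: ln_div field_simps ln_mult[symmetric])
    also have "ln (1 + 1 / (real q + 1)) \<le> 1 / (real q + 1)"
      by (rule ln_add_one_self_le_self) simp
    finally show ?thesis using Suc False
      by (simp add: atLeastAtMostSuc_conv add.commute)
  qed
qed

lemma exp_neg_psi: "exp (- psi t' L) \<le> min 1 ((real t' / (real (L div 2) + 1))^2)" if "1 \<le> t'"
proof -
  have h1: "exp (- psi t' L) \<le> 1" using psi_nonneg by simp
  have "psi t' L \<ge> 2 * ln ((real (L div 2) + 1) / real t')"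
  proof -
    have "psi t' (2 * (L div 2)) \<le> psi t' L" by (rule psi_mono) simp
    then show ?thesis using psi_even[OF that, of "L div 2"] harm_ln[OF that, of "L div 2"] by linarith
  qed
  then have "exp (- psi t' L) \<le> exp (- 2 * ln ((real (L div 2) + 1) / real t'))" by simp
  also have "\<dots> = (real t' / (real (L div 2) + 1))^2"
  proof -
    have p: "0 < (real (L div 2) + 1) / real t'" using that by simp
    have "exp (- 2 * ln ((real (L div 2) + 1) / real t')) = inverse (exp (ln ((real (L div 2) + 1) / real t')))^2"
      by (simp add: exp_minus[symmetric] power2_eq_square exp_add[symmetric])
    also have "\<dots> = (real t' / (real (L div 2) + 1))^2" using p by (simp add: field_simps)
    finally show ?thesis .
  qed
  finally show ?thesis using h1 by simp
qed

definition cq :: "nat \<Rightarrow> nat \<Rightarrow> real" where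
  "cq t' q = min 1 ((real t' / (real q + 1))^2)"

lemma sum_cq: "(\<Sum>q<N. cq t' q) \<le> (if N \<le> t' then real N else 2 * real t' - (real t')^2 / real N)"
  if "1 \<le> t'"
proof (induction N)
  case 0 then show ?case by simp
next
  case (Suc N)
  have c1: "cq t' N \<le> 1" by (simp add: cq_def)
  show ?case
  proof (cases "Suc N \<le> t'")
    case True then show ?thesis using Suc c1 by simp
  next
    case False
    then have Nt: "t' \<le> N" by simp
    have c2: "cq t' N \<le> (real t')^2 * (1 / real N - 1 / (real N + 1))"
    proof -
      have Npos: "0 < real N" using Nt that by simp
      have "cq t' N \<le> (real t' / (real N + 1))^2" by (simp add: cq_def)
      also have "\<dots> = (real t')^2 / (real N + 1)^2" by (simp add: power_divide)
      also have "\<dots> \<le> (real t')^2 / (real N * (real N + 1))"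
        using Npos by (intro divide_left_mono) (auto simp: power2_eq_square)
      also have "\<dots> = (real t')^2 * (1 / real N - 1 / (real N + 1))"
        using Npos by (simp add: field_simps)
      finally show ?thesis .
    qed
    have prev: "(\<Sum>q<N. cq t' q) \<le> 2 * real t' - (real t')^2 / real N"
    proof (cases "N \<le> t'")
      case True
      then have "N = t'" using Nt by simp
      then show ?thesis using Suc True that by (simp add: power2_eq_square)
    next
      case False then show ?thesis using Suc by simp
    qed
    have "(\<Sum>q<Suc N. cq t' q) \<le> 2 * real t' - (real t')^2 / real N + (real t')^2 * (1 / real N - 1 / (real N + 1))"
      using prev c2 by simp
    also have "\<dots> = 2 * real t' - (real t')^2 / real (Suc N)" by (simp add: field_simps)
    finally show ?thesis using False by simp
  qed
qed

lemma sum_cq_le: "(\<Sum>q<N. cq t' q) \<le> 2 * real t'" if "1 \<le> t'"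
proof -
  have "(if N \<le> t' then real N else 2 * real t' - (real t')^2 / real N) \<le> 2 * real t'"
    by auto
  then show ?thesis using sum_cq[OF that, of N] by linarith
qed

lemma sum_pairs: "(\<Sum>L<2*N. f (L div 2)) = 2 * (\<Sum>q<N. f q :: real)" for N :: nat and f :: "nat \<Rightarrow> real"
  by (induction N) (auto simp: algebra_simps)

lemma sum_exp_psi: "(\<Sum>L<N. exp (- psi t' L)) \<le> 4 * real t'" if "1 \<le> t'"
proof -
  have "(\<Sum>L<N. exp (- psi t' L)) \<le> (\<Sum>L<N. cq t' (L div 2))"
    using exp_neg_psi[OF that] by (intro sum_mono) (simp add: cq_def)
  also have "\<dots> \<le> (\<Sum>L<2*N. cq t' (L div 2))"
    by (intro sum_mono2) (auto simp: cq_def)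
  also have "\<dots> = 2 * (\<Sum>q<N. cq t' q)" by (rule sum_pairs)
  also have "\<dots> \<le> 4 * real t'" using sum_cq_le[OF that, of N] by simp
  finally show ?thesis .
qed

lemma sum_shift_bound:
  fixes f :: "nat \<Rightarrow> real"
  assumes "\<And>L. f L \<le> 1"
  shows "(\<Sum>t<N. f (t - d)) \<le> real (min N d) + (\<Sum>L<N - d. f L)"
proof (induction N)
  case 0 then show ?case by simp
next
  case (Suc N)
  show ?case
  proof (cases "N < d")
    case True
    then have "Suc N - d = 0" "N - d = 0" by auto
    then show ?thesis using Suc assms[of "N - d"] True by simp
  next
    case False
    then have "Suc N - d = Suc (N - d)" "min (Suc N) d = min N d" by auto
    then show ?thesis using Suc by simp
  qed
qed

lemma atom_bound:
  assumes "1 \<le> t'"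
  shows "(\<Sum>t. ennreal (exp (- psi t' (t - d)))) \<le> ennreal (4 * real t' + real d)"
proof (rule suminf_le_const[OF summableI])
  fix N
  have "(\<Sum>t<N. exp (- psi t' (t - d))) \<le> real (min N d) + (\<Sum>L<N - d. exp (- psi t' L))"
    by (rule sum_shift_bound) (use psi_nonneg in simp)
  also have "\<dots> \<le> real d + 4 * real t'" using sum_exp_psi[OF assms, of "N - d"] by simp
  finally have "(\<Sum>t<N. exp (- psi t' (t - d))) \<le> 4 * real t' + real d" by simp
  moreover have "(\<Sum>t<N. ennreal (exp (- psi t' (t - d)))) = ennreal (\<Sum>t<N. exp (- psi t' (t - d)))"
    by (rule sum_ennreal) simp
  ultimately show "(\<Sum>t<N. ennreal (exp (- psi t' (t - d)))) \<le> ennreal (4 * real t' + real d)"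
    by (simp only: ennreal_leI)
qed

lemma trunc_exists:
  fixes w :: "'j \<Rightarrow> real" and a :: "'j \<Rightarrow> nat"
  assumes "finite J"
  shows "(\<forall>j\<in>J. 0 \<le> w j) \<longrightarrow> 1 \<le> sum w J \<longrightarrow>
    (\<exists>w'. (\<forall>j\<in>J. 0 \<le> w' j \<and> w' j \<le> w j) \<and>
      (\<forall>s. (\<Sum>j\<in>J. if a j \<le> s then w' j else 0) = min (\<Sum>j\<in>J. if a j \<le> s then w j else 0) 1))"
  using assms
proof (induction J rule: finite_ranking_induct[where f = a])
  case empty
  then show ?case by simp
next
  case (insert x S)
  show ?case
  proof (cases "x \<in> S")
    case True
    then show ?thesis using insert by (simp add: insert_absorb)
  next
    case xS: False
    show ?thesis
    proof (intro impI)
      assume nn: "\<forall>j\<in>insert x S. 0 \<le> w j" and one: "1 \<le> sum w (insert x S)"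
      have full: "(\<Sum>j\<in>S. if a j \<le> s then f j else 0) = sum f S" if "a x \<le> s" for s and f :: "'j \<Rightarrow> real"
        using insert(2) that by (intro sum.cong) (auto intro: order.trans)
      show "\<exists>w'. (\<forall>j\<in>insert x S. 0 \<le> w' j \<and> w' j \<le> w j) \<and>
          (\<forall>s. (\<Sum>j\<in>insert x S. if a j \<le> s then w' j else 0) =
               min (\<Sum>j\<in>insert x S. if a j \<le> s then w j else 0) 1)"
      proof (cases "1 \<le> sum w S")
        case True
        with insert nn obtain w'' where w'': "\<forall>j\<in>S. 0 \<le> w'' j \<and> w'' j \<le> w j"
          "\<forall>s. (\<Sum>j\<in>S. if a j \<le> s then w'' j else 0) = min (\<Sum>j\<in>S. if a j \<le> s then w j else 0) 1"
          by auto
        define w' where "w' = w''(x := 0)"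
        have eqS: "(\<Sum>j\<in>S. if a j \<le> s then w' j else 0) = (\<Sum>j\<in>S. if a j \<le> s then w'' j else 0)" for s
          unfolding w'_def using xS by (intro sum.cong) auto
        show ?thesis
        proof (intro exI[of _ w'] conjI ballI allI)
          fix j assume "j \<in> insert x S"
          then show "0 \<le> w' j" "w' j \<le> w j" using w'' nn by (auto simp: w'_def)
        next
          fix s
          show "(\<Sum>j\<in>insert x S. if a j \<le> s then w' j else 0) =
               min (\<Sum>j\<in>insert x S. if a j \<le> s then w j else 0) 1"
          proof (cases "a x \<le> s")
            case ax: True
            have "(\<Sum>j\<in>insert x S. if a j \<le> s then w' j else 0) = min (sum w S) 1"
              using insert(1) xS eqS[of s] w''(2) full[OF ax, of w] by (simp add: w'_def)
            also have "\<dots> = 1" using True by simp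
            also have "\<dots> = min (\<Sum>j\<in>insert x S. if a j \<le> s then w j else 0) 1"
              using insert(1) xS full[OF ax, of w] True nn ax by simp
            finally show ?thesis .
          next
            case False
            then show ?thesis using insert(1) xS eqS[of s] w''(2) by (simp add: w'_def)
          qed
        qed
      next
        case False
        define w' where "w' = w(x := 1 - sum w S)"
        have eqS: "(\<Sum>j\<in>S. if a j \<le> s then w' j else 0) = (\<Sum>j\<in>S. if a j \<le> s then w j else 0)" for s
          unfolding w'_def using xS by (intro sum.cong) auto
        have sumins: "sum w (insert x S) = w x + sum w S" using insert(1) xS by simp
        have partial: "(\<Sum>j\<in>S. if a j \<le> s then w j else 0) \<le> sum w S" for s
          using nn by (intro sum_mono) auto
        show ?thesis
        proof (intro exI[of _ w'] conjI ballI allI)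
          fix j assume "j \<in> insert x S"
          then show "0 \<le> w' j" "w' j \<le> w j" using nn False one sumins by (auto simp: w'_def)
        next
          fix s
          show "(\<Sum>j\<in>insert x S. if a j \<le> s then w' j else 0) =
               min (\<Sum>j\<in>insert x S. if a j \<le> s then w j else 0) 1"
          proof (cases "a x \<le> s")
            case ax: True
            show ?thesis using insert(1) xS eqS[of s] full[OF ax, of w] one sumins ax
              by (simp add: w'_def)
          next
            case ax: False
            show ?thesis using insert(1) xS eqS[of s] partial[of s] False ax
              by (simp add: w'_def)
          qed
        qed
      qed
    qed
  qed
qed

lemma suminf_top_if_ge:
  fixes f :: "nat \<Rightarrow> ennreal"
  assumes "0 < c" "\<And>s. ennreal c \<le> f s"
  shows "(\<Sum>s. f s) = top"
proof (rule ccontr)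
  assume "(\<Sum>s. f s) \<noteq> top"
  then obtain r where r: "(\<Sum>s. f s) = ennreal r" "0 \<le> r" using ennreal_cases[of "\<Sum>s. f s"] by auto
  define m where "m = nat \<lceil>r / c\<rceil> + 1"
  have "r < real m * c"
  proof -
    have "r / c < real m" unfolding m_def by linarith
    then show ?thesis using assms(1) by (simp add: field_simps)
  qed
  have "ennreal (real m * c) = (\<Sum>s<m. ennreal c)" using assms(1) by (simp add: ennreal_of_nat_eq_real_of_nat ennreal_mult')
  also have "\<dots> \<le> (\<Sum>s<m. f s)" by (intro sum_mono assms(2))
  also have "\<dots> \<le> (\<Sum>s. f s)" by (rule sum_le_suminf) auto
  finally have "real m * c \<le> r" using r assms(1) by (simp add: ennreal_le_iff)
  then show False using \<open>r < real m * c\<close> by simp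
qed

lemma jensen_bound:
  fixes w :: "'j \<Rightarrow> real" and a :: "'j \<Rightarrow> nat" and \<phi> :: "'j \<Rightarrow> nat \<Rightarrow> real"
  assumes J: "finite J" and w: "\<And>j. j \<in> J \<Longrightarrow> 0 \<le> w j" and phi: "\<And>j t. j \<in> J \<Longrightarrow> 0 \<le> \<phi> j t"
    and atom: "\<And>j. j \<in> J \<Longrightarrow> (\<Sum>t. ennreal (exp (- \<phi> j t))) \<le> ennreal (4 * real (a j))"
  shows "(\<Sum>t. ennreal (exp (- (\<Sum>j\<in>J. w j * \<phi> j t))))
    \<le> 4 * (\<Sum>s. ennreal (max 0 (1 - (\<Sum>j\<in>J. if a j \<le> s then w j else 0))))"
proof (cases "1 \<le> sum w J")
  case False
  have "(\<Sum>s. ennreal (max 0 (1 - (\<Sum>j\<in>J. if a j \<le> s then w j else 0)))) = top"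
  proof (rule suminf_top_if_ge[of "1 - sum w J"])
    show "0 < 1 - sum w J" using False by simp
    fix s
    have "(\<Sum>j\<in>J. if a j \<le> s then w j else 0) \<le> sum w J" using w by (intro sum_mono) auto
    then show "ennreal (1 - sum w J) \<le> ennreal (max 0 (1 - (\<Sum>j\<in>J. if a j \<le> s then w j else 0)))"
      by (intro ennreal_leI) simp
  qed
  then show ?thesis by simp
next
  case True
  obtain w' where w'1: "\<forall>j\<in>J. 0 \<le> w' j \<and> w' j \<le> w j"
    and w'2: "\<forall>s. (\<Sum>j\<in>J. if a j \<le> s then w' j else 0) = min (\<Sum>j\<in>J. if a j \<le> s then w j else 0) 1"
    using trunc_exists[OF J, of w a] True w by auto
  have Jne: "J \<noteq> {}" using True by auto
  have allS: "(\<Sum>j\<in>J. if a j \<le> sum a J then f j else 0) = sum f J" for f :: "'j \<Rightarrow> real"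
    using J by (intro sum.cong) (auto intro: member_le_sum)
  have sw': "sum w' J = 1" using w'2[rule_format, of "sum a J"] True unfolding allS by simp
  have step1: "ennreal (exp (- (\<Sum>j\<in>J. w j * \<phi> j t))) \<le> (\<Sum>j\<in>J. ennreal (w' j) * ennreal (exp (- \<phi> j t)))" for t
  proof -
    have "exp (- (\<Sum>j\<in>J. w j * \<phi> j t)) \<le> exp (- (\<Sum>j\<in>J. w' j * \<phi> j t))"
      using w'1 phi by (auto intro!: sum_mono mult_right_mono)
    also have "\<dots> = exp (\<Sum>j\<in>J. w' j *\<^sub>R (- \<phi> j t))" by (simp add: sum_negf)
    also have "\<dots> \<le> (\<Sum>j\<in>J. w' j * exp (- \<phi> j t))"
      using convex_on_sum[OF J Jne exp_convex sw', of "\<lambda>j. - \<phi> j t"] w'1 by auto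
    finally have "exp (- (\<Sum>j\<in>J. w j * \<phi> j t)) \<le> (\<Sum>j\<in>J. w' j * exp (- \<phi> j t))" .
    then have "ennreal (exp (- (\<Sum>j\<in>J. w j * \<phi> j t))) \<le> ennreal (\<Sum>j\<in>J. w' j * exp (- \<phi> j t))"
      by (rule ennreal_leI)
    also have "\<dots> = (\<Sum>j\<in>J. ennreal (w' j * exp (- \<phi> j t)))"
      using w'1 by (intro sum_ennreal[symmetric]) auto
    also have "\<dots> = (\<Sum>j\<in>J. ennreal (w' j) * ennreal (exp (- \<phi> j t)))"
      using w'1 by (intro sum.cong refl ennreal_mult) auto
    finally show ?thesis .
  qed
  have "(\<Sum>t. ennreal (exp (- (\<Sum>j\<in>J. w j * \<phi> j t)))) \<le> (\<Sum>t. \<Sum>j\<in>J. ennreal (w' j) * ennreal (exp (- \<phi> j t)))"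
    by (intro suminf_le summableI step1)
  also have "\<dots> = (\<Sum>j\<in>J. \<Sum>t. ennreal (w' j) * ennreal (exp (- \<phi> j t)))"
    by (rule suminf_sum) auto
  also have "\<dots> = (\<Sum>j\<in>J. ennreal (w' j) * (\<Sum>t. ennreal (exp (- \<phi> j t))))"
    by simp
  also have "\<dots> \<le> (\<Sum>j\<in>J. ennreal (w' j) * ennreal (4 * real (a j)))"
    by (intro sum_mono mult_left_mono atom) auto
  also have "\<dots> = 4 * (\<Sum>j\<in>J. ennreal (w' j * real (a j)))"
  proof -
    have "ennreal (w' j) * ennreal (4 * real (a j)) = 4 * ennreal (w' j * real (a j))" if "j \<in> J" for j
    proof -
      have nn: "0 \<le> w' j" using w'1 that by auto
      have "ennreal (w' j) * ennreal (4 * real (a j)) = ennreal (w' j * (4 * real (a j)))"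
        using nn by (intro ennreal_mult[symmetric]) auto
      also have "\<dots> = ennreal (4 * (w' j * real (a j)))" by (simp add: algebra_simps)
      also have "\<dots> = ennreal 4 * ennreal (w' j * real (a j))" using nn by (intro ennreal_mult) auto
      finally show ?thesis by simp
    qed
    then show ?thesis by (simp add: sum_distrib_left)
  qed
  also have "(\<Sum>j\<in>J. ennreal (w' j * real (a j))) = (\<Sum>j\<in>J. \<Sum>s. ennreal (if s < a j then w' j else 0))"
  proof (intro sum.cong refl)
    fix j assume "j \<in> J"
    have "(\<Sum>s. ennreal (if s < a j then w' j else 0)) = (\<Sum>s<a j. ennreal (if s < a j then w' j else 0))"
      by (rule suminf_finite) auto
    also have "\<dots> = ennreal (w' j * real (a j))"
      using w'1 \<open>j \<in> J\<close> by (simp add: ennreal_mult ennreal_of_nat_eq_real_of_nat mult.commute)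
    finally show "ennreal (w' j * real (a j)) = (\<Sum>s. ennreal (if s < a j then w' j else 0))" ..
  qed
  also have "\<dots> = (\<Sum>s. \<Sum>j\<in>J. ennreal (if s < a j then w' j else 0))"
    by (rule suminf_sum[symmetric]) auto
  also have "\<dots> = (\<Sum>s. ennreal (max 0 (1 - (\<Sum>j\<in>J. if a j \<le> s then w j else 0))))"
  proof (intro suminf_cong)
    fix s
    have "(\<Sum>j\<in>J. ennreal (if s < a j then w' j else 0)) = ennreal (\<Sum>j\<in>J. if s < a j then w' j else 0)"
      using w'1 by (intro sum_ennreal) auto
    also have "(\<Sum>j\<in>J. if s < a j then w' j else 0) = sum w' J - (\<Sum>j\<in>J. if a j \<le> s then w' j else 0)"
      by (auto simp add: sum_subtractf[symmetric] intro!: sum.cong)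
    also have "\<dots> = max 0 (1 - (\<Sum>j\<in>J. if a j \<le> s then w j else 0))"
      using sw' w'2 by (simp add: min_def max_def)
    finally show "(\<Sum>j\<in>J. ennreal (if s < a j then w' j else 0)) = ennreal (max 0 (1 - (\<Sum>j\<in>J. if a j \<le> s then w j else 0)))" .
  qed
  finally show ?thesis .
qed

lemma continuous_on_Min_fin:
  fixes f :: "'i \<Rightarrow> real \<Rightarrow> real"
  assumes "finite A" "A \<noteq> {}" "\<And>i. i \<in> A \<Longrightarrow> continuous_on S (f i)"
  shows "continuous_on S (\<lambda>k. Min ((\<lambda>i. f i k) ` A))"
  using assms
proof (induction A rule: finite_ne_induct)
  case (singleton x)
  then show ?case by simp
next
  case (insert x F)
  have "(\<lambda>k. Min ((\<lambda>i. f i k) ` insert x F)) = (\<lambda>k. min (f x k) (Min ((\<lambda>i. f i k) ` F)))"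
    using insert by (simp add: Min_insert)
  then show ?case using insert by (auto intro!: continuous_on_min)
qed

locale ski =
  fixes A :: "'i set" and a b :: "'i \<Rightarrow> real"
  assumes finA: "finite A" and neA: "A \<noteq> {}" and a_nn: "\<And>i. i \<in> A \<Longrightarrow> 0 \<le> a i"
    and b_nn: "\<And>i. i \<in> A \<Longrightarrow> 0 \<le> b i"
begin

definition lpsi where "lpsi k = Min ((\<lambda>i. a i + k * b i) ` A)"
definition jmin where "jmin k = (SOME j. j \<in> A \<and> lpsi k = a j + k * b j)"
definition Phi where "Phi k = lpsi k * exp k"
definition Phi' where "Phi' k = (lpsi k + b (jmin k)) * exp k"

lemma lpsi_le: "i \<in> A \<Longrightarrow> lpsi k \<le> a i + k * b i"
  unfolding lpsi_def using finA by (intro Min_le) auto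

lemma lpsi_attained: "\<exists>j\<in>A. lpsi k = a j + k * b j"
proof -
  have "lpsi k \<in> (\<lambda>i. a i + k * b i) ` A" unfolding lpsi_def using finA neA by (intro Min_in) auto
  then show ?thesis by auto
qed

lemma jmin: "jmin k \<in> A" "lpsi k = a (jmin k) + k * b (jmin k)"
proof -
  have "\<exists>j. j \<in> A \<and> lpsi k = a j + k * b j" using lpsi_attained by auto
  then have "jmin k \<in> A \<and> lpsi k = a (jmin k) + k * b (jmin k)"
    unfolding jmin_def by (rule someI_ex)
  then show "jmin k \<in> A" "lpsi k = a (jmin k) + k * b (jmin k)" by auto
qed

lemma lpsi_nonneg: "0 \<le> k \<Longrightarrow> 0 \<le> lpsi k"
  using jmin[of k] a_nn b_nn by simp

definition S where "S = (\<Union>i\<in>A. \<Union>j\<in>A. {k. (a i, b i) \<noteq> (a j, b j) \<and> a i + k * b i = a j + k * b j})"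

lemma finite_S: "finite S"
  unfolding S_def
proof (intro finite_UN_I finA)
  fix i j assume "i \<in> A" "j \<in> A"
  show "finite {k. (a i, b i) \<noteq> (a j, b j) \<and> a i + k * b i = a j + k * b j}"
  proof (cases "b i = b j")
    case True
    then show ?thesis by auto
  next
    case False
    have "{k. (a i, b i) \<noteq> (a j, b j) \<and> a i + k * b i = a j + k * b j} \<subseteq> {(a j - a i) / (b i - b j)}"
      using False by (auto simp: field_simps)
    then show ?thesis by (rule finite_subset) simp
  qed
qed

lemma deriv_Phi:
  assumes "k \<notin> S"
  shows "(Phi has_real_derivative Phi' k) (at k)"
proof -
  obtain j where j: "j \<in> A" "lpsi k = a j + k * b j" using lpsi_attained by auto
  define B where "B = {i\<in>A. (a i, b i) \<noteq> (a j, b j)}"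
  define U where "U = (\<Inter>i\<in>B. {y. a j + y * b j < a i + y * b i})"
  have "open U" unfolding U_def B_def using finA
    by (intro open_INT) (auto intro!: open_Collect_less continuous_intros)
  have kU: "k \<in> U"
  proof -
    { fix i assume i: "i \<in> B"
      then have "a j + k * b j \<le> a i + k * b i" using lpsi_le[of i k] j unfolding B_def by auto
      moreover have "a j + k * b j \<noteq> a i + k * b i"
        using assms i j unfolding S_def B_def by fastforce
      ultimately have "a j + k * b j < a i + k * b i" by simp }
    then show ?thesis unfolding U_def by auto
  qed
  have eqU: "(\<lambda>y. (a j + y * b j) * exp y) y = Phi y" if "y \<in> U" for y
  proof -
    have "lpsi y = a j + y * b j"
      unfolding lpsi_def
    proof (rule Min_eqI)
      show "finite ((\<lambda>i. a i + y * b i) ` A)" using finA by simp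
      show "a j + y * b j \<in> (\<lambda>i. a i + y * b i) ` A" using j by auto
      fix z assume "z \<in> (\<lambda>i. a i + y * b i) ` A"
      then obtain i where i: "i \<in> A" "z = a i + y * b i" by auto
      show "a j + y * b j \<le> z"
      proof (cases "i \<in> B")
        case True then show ?thesis using that i unfolding U_def by force
      next
        case False then show ?thesis using i unfolding B_def by auto
      qed
    qed
    then show ?thesis unfolding Phi_def by simp
  qed
  have d: "((\<lambda>y. (a j + y * b j) * exp y) has_real_derivative (b j * exp k + (a j + k * b j) * exp k)) (at k)"
    by (auto intro!: derivative_eq_intros)
  have "b (jmin k) = b j"
  proof (rule ccontr)
    assume ne: "b (jmin k) \<noteq> b j"
    have "a (jmin k) + k * b (jmin k) = a j + k * b j" using jmin[of k] j by simp
    then have "k \<in> S" unfolding S_def using ne jmin(1)[of k] j(1) by blast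
    then show False using assms by simp
  qed
  then have "Phi' k = b j * exp k + (a j + k * b j) * exp k"
    unfolding Phi'_def using j by (simp add: algebra_simps)
  then show ?thesis
    using has_field_derivative_transform_within_open[OF d \<open>open U\<close> kU eqU] by simp
qed

lemma cont_Phi: "continuous_on T Phi"
proof -
  have "continuous_on T lpsi" unfolding lpsi_def
    using finA neA by (intro continuous_on_Min_fin) (auto intro!: continuous_intros)
  then show ?thesis unfolding Phi_def by (auto intro!: continuous_intros)
qed

lemma Phi'_integral: "(Phi' has_integral (Phi 4 - Phi 0)) {0..4}"
proof (rule fundamental_theorem_of_calculus_interior_strong[OF finite_S])
  show "(0::real) \<le> 4" by simp
  fix x assume "x \<in> {0<..<4} - S"
  then show "(Phi has_vector_derivative Phi' x) (at x)"
    using deriv_Phi by (simp add: has_real_derivative_iff_has_vector_derivative)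
qed (rule cont_Phi)

lemma ski_bound:
  fixes C :: "real \<Rightarrow> real" and Z :: real
  assumes Z: "0 < Z"
    and C: "\<And>k j. 0 \<le> k \<Longrightarrow> k \<le> 4 \<Longrightarrow> j \<in> A \<Longrightarrow> (\<forall>i\<in>A. a j + k * b j \<le> a i + k * b i) \<Longrightarrow>
              C k \<le> a j + k * b j + b j"
    and Cnn: "\<And>k. 0 \<le> C k"
  shows "(\<integral>\<^sup>+ k. indicator {0..4} k * ennreal (exp k / Z) * ennreal (C k) \<partial>lborel)
          \<le> ennreal (exp 4 / Z * lpsi 4)"
proof -
  have Phi'nn: "0 \<le> Phi' k" if "k \<in> {0..4}" for k
    using that lpsi_nonneg[of k] b_nn[OF jmin(1)[of k]] unfolding Phi'_def by simp
  have I: "((\<lambda>k. Phi' k / Z) has_integral ((Phi 4 - Phi 0) / Z)) {0..4}"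
    using Phi'_integral by (rule has_integral_divide)
  have "(\<integral>\<^sup>+ k. indicator {0..4} k * ennreal (exp k / Z) * ennreal (C k) \<partial>lborel)
      \<le> (\<integral>\<^sup>+ k. ennreal (indicator {0..4} k * (Phi' k / Z)) \<partial>lborel)"
  proof (intro nn_integral_mono)
    fix k :: real
    show "indicator {0..4} k * ennreal (exp k / Z) * ennreal (C k) \<le> ennreal (indicator {0..4} k * (Phi' k / Z))"
    proof (cases "k \<in> {0..4}")
      case True
      have "C k \<le> lpsi k + b (jmin k)"
        using C[of k "jmin k"] True jmin[of k] lpsi_le[of _ k] by auto
      then have "C k * exp k \<le> (lpsi k + b (jmin k)) * exp k" by (rule mult_right_mono) simp
      then have "(C k * exp k) / Z \<le> Phi' k / Z"
        using Z unfolding Phi'_def by (intro divide_right_mono) auto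
      then have "exp k / Z * C k \<le> Phi' k / Z" by (simp add: mult.commute)
      then have "ennreal (exp k / Z * C k) \<le> ennreal (Phi' k / Z)" by (rule ennreal_leI)
      then show ?thesis using True Z Cnn[of k] by (simp add: ennreal_mult[symmetric])
    next
      case False then show ?thesis by simp
    qed
  qed
  also have "\<dots> = ennreal ((Phi 4 - Phi 0) / Z)"
    by (rule nn_integral_has_integral_lebesgue[OF _ I]) (use Phi'nn Z in auto)
  also have "\<dots> \<le> ennreal (exp 4 / Z * lpsi 4)"
  proof (rule ennreal_leI)
    have "0 \<le> Phi 0" unfolding Phi_def using lpsi_nonneg[of 0] by simp
    then show "(Phi 4 - Phi 0) / Z \<le> exp 4 / Z * lpsi 4"
      using Z unfolding Phi_def by (simp add: divide_right_mono field_simps)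
  qed
  finally show ?thesis .
qed

end

lemma card_before:
  fixes \<alpha> :: "nat \<Rightarrow> enat"
  assumes P1: "\<And>i m. \<alpha> i = enat m \<Longrightarrow> 1 \<le> m" and P2: "\<And>i l. \<alpha> i = \<alpha> l \<Longrightarrow> \<alpha> i \<noteq> \<infinity> \<Longrightarrow> i = l"
    and j: "j < n" "\<alpha> j = enat aj"
  shows "card {l. l < n \<and> (\<alpha> l < \<alpha> j \<or> (\<alpha> l = \<alpha> j \<and> l < j))} < min aj n"
proof -
  have Q: "{l. l < n \<and> (\<alpha> l < \<alpha> j \<or> (\<alpha> l = \<alpha> j \<and> l < j))} = {l. l < n \<and> \<alpha> l < \<alpha> j}"
  proof (intro Collect_cong iffI)
    fix l assume "l < n \<and> (\<alpha> l < \<alpha> j \<or> (\<alpha> l = \<alpha> j \<and> l < j))"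
    then show "l < n \<and> \<alpha> l < \<alpha> j" using P2[of l j] j by auto
  qed auto
  have c1: "card {l. l < n \<and> \<alpha> l < \<alpha> j} < n"
  proof -
    have "{l. l < n \<and> \<alpha> l < \<alpha> j} \<subseteq> {..<n} - {j}" by auto
    then have "card {l. l < n \<and> \<alpha> l < \<alpha> j} \<le> card ({..<n} - {j})" by (intro card_mono) auto
    also have "\<dots> < n" using j by simp
    finally show ?thesis .
  qed
  have c2: "card {l. l < n \<and> \<alpha> l < \<alpha> j} < aj"
  proof -
    have inj: "inj_on (\<lambda>l. the_enat (\<alpha> l)) {l. l < n \<and> \<alpha> l < \<alpha> j}"
    proof (rule inj_onI)
      fix l l' assume l: "l \<in> {l. l < n \<and> \<alpha> l < \<alpha> j}" and l': "l' \<in> {l. l < n \<and> \<alpha> l < \<alpha> j}"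
        and eq: "the_enat (\<alpha> l) = the_enat (\<alpha> l')"
      have "\<alpha> l \<noteq> \<infinity>" using l j by (cases "\<alpha> l") auto
      have "\<alpha> l' \<noteq> \<infinity>" using l' j by (cases "\<alpha> l'") auto
      then have "\<alpha> l = \<alpha> l'" using eq \<open>\<alpha> l \<noteq> \<infinity>\<close> by (cases "\<alpha> l"; cases "\<alpha> l'") auto
      then show "l = l'" using P2 \<open>\<alpha> l \<noteq> \<infinity>\<close> by blast
    qed
    have img: "(\<lambda>l. the_enat (\<alpha> l)) ` {l. l < n \<and> \<alpha> l < \<alpha> j} \<subseteq> {1..<aj}"
    proof
      fix y assume "y \<in> (\<lambda>l. the_enat (\<alpha> l)) ` {l. l < n \<and> \<alpha> l < \<alpha> j}"
      then obtain l where l: "l < n" "\<alpha> l < \<alpha> j" "y = the_enat (\<alpha> l)" by auto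
      then obtain m where m: "\<alpha> l = enat m" using j by (cases "\<alpha> l") auto
      then show "y \<in> {1..<aj}" using l j P1[OF m] by auto
    qed
    have "card {l. l < n \<and> \<alpha> l < \<alpha> j} = card ((\<lambda>l. the_enat (\<alpha> l)) ` {l. l < n \<and> \<alpha> l < \<alpha> j})"
      using inj by (simp add: card_image)
    also have "\<dots> \<le> card {1..<aj}" using img by (intro card_mono) auto
    also have "\<dots> < aj" using P1[OF j(2)] by simp
    finally show ?thesis .
  qed
  show ?thesis using Q c1 c2 by simp
qed

lemma da_cost_bound:
  fixes \<alpha> :: "nat \<Rightarrow> enat" and v :: "nat \<Rightarrow> nat"
  assumes P1: "\<And>i m. \<alpha> i = enat m \<Longrightarrow> 1 \<le> m" and P2: "\<And>i l. \<alpha> i = \<alpha> l \<Longrightarrow> \<alpha> i \<noteq> \<infinity> \<Longrightarrow> i = l"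
    and j: "j < n" "\<alpha> j = enat aj" and k: "0 \<le> k"
    and minj: "\<And>i ai. i < n \<Longrightarrow> \<alpha> i = enat ai \<Longrightarrow> real aj + k * real (v j) \<le> real ai + k * real (v i)"
  shows "real (da_cost n k \<alpha> v) \<le> real aj + k * real (v j) + real (v j)"
proof -
  define d where "d i = nat \<lfloor>k * real (v i)\<rfloor>" for i
  have d_le: "real (d i) \<le> k * real (v i)" for i
    using k unfolding d_def by simp
  have d_gt: "k * real (v i) < real (d i) + 1" for i
    using k unfolding d_def by linarith
  define T where "T = Min ((\<lambda>i. \<alpha> i + enat (nat \<lfloor>k * real (v i)\<rfloor>)) ` {..<n})"
  have T: "T = enat (aj + d j)"
    unfolding T_def
  proof (rule Min_eqI)
    show "finite ((\<lambda>i. \<alpha> i + enat (nat \<lfloor>k * real (v i)\<rfloor>)) ` {..<n})" by simp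
    show "enat (aj + d j) \<in> (\<lambda>i. \<alpha> i + enat (nat \<lfloor>k * real (v i)\<rfloor>)) ` {..<n}"
      using j by (auto simp: d_def intro!: image_eqI[of _ _ j])
    fix y assume "y \<in> (\<lambda>i. \<alpha> i + enat (nat \<lfloor>k * real (v i)\<rfloor>)) ` {..<n}"
    then obtain i where i: "i < n" "y = \<alpha> i + enat (d i)" by (auto simp: d_def)
    show "enat (aj + d j) \<le> y"
    proof (cases "\<alpha> i")
      case (enat ai)
      have "real aj + real (d j) < real ai + real (d i) + 1"
        using minj[OF i(1) enat] d_le[of j] d_gt[of i] by linarith
      then have "aj + d j \<le> ai + d i" by linarith
      then show ?thesis using i enat by simp
    next
      case infinity then show ?thesis using i by simp
    qed
  qed
  define m where "m = min (aj + d j) n"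
  define Sx where "Sx = {i. i < n \<and> card {l. l < n \<and> (\<alpha> l < \<alpha> i \<or> (\<alpha> l = \<alpha> i \<and> l < i))} < m}"
  have jS: "j \<in> Sx"
  proof -
    have "card {l. l < n \<and> (\<alpha> l < \<alpha> j \<or> (\<alpha> l = \<alpha> j \<and> l < j))} < min aj n"
      by (intro card_before[where \<alpha>=\<alpha>]) (use P1 P2 j in auto)
    then show ?thesis unfolding Sx_def m_def using j by auto
  qed
  have minv: "Min (v ` Sx) \<le> v j"
    using jS by (intro Min_le) (auto simp: Sx_def)
  have "da_cost n k \<alpha> v = m + Min (v ` Sx)"
    unfolding da_cost_def Let_def T_def[symmetric] T m_def Sx_def by simp
  then have "da_cost n k \<alpha> v \<le> aj + d j + v j" using minv unfolding m_def by linarith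
  then have "real (da_cost n k \<alpha> v) \<le> real aj + real (d j) + real (v j)" by linarith
  then show ?thesis using d_le[of j] by linarith
qed

lemma ski_da:
  fixes \<alpha> :: "nat \<Rightarrow> enat" and v :: "nat \<Rightarrow> nat"
  assumes P1: "\<And>i m. \<alpha> i = enat m \<Longrightarrow> 1 \<le> m" and P2: "\<And>i l. \<alpha> i = \<alpha> l \<Longrightarrow> \<alpha> i \<noteq> \<infinity> \<Longrightarrow> i = l"
    and n: "1 \<le> n"
  shows "(\<integral>\<^sup>+ k. indicator {0..4} k * ennreal (exp k / (exp 4 - 1)) * ennreal (real (da_cost n k \<alpha> v)) \<partial>lborel)
     \<le> ennreal (exp 4 / (exp 4 - 1)) * ennreal_of_enat (Min ((\<lambda>i. \<alpha> i + enat (4 * v i)) ` {..<n}))"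
proof -
  have Z: "0 < exp 4 - (1::real)" by simp
  define A where "A = {i. i < n \<and> \<alpha> i \<noteq> \<infinity>}"
  show ?thesis
  proof (cases "A = {}")
    case True
    have "Min ((\<lambda>i. \<alpha> i + enat (4 * v i)) ` {..<n}) = \<infinity>"
      using True n unfolding A_def by (intro Min_eqI) (auto intro!: image_eqI[of _ _ 0])
    moreover have "ennreal (exp 4 / (exp 4 - 1)) \<noteq> 0" using Z by simp
    ultimately show ?thesis by (simp add: ennreal_mult_top)
  next
    case False
    interpret ski A "\<lambda>i. real (the_enat (\<alpha> i))" "\<lambda>i. real (v i)"
      by unfold_locales (use False[unfolded A_def] in \<open>auto simp: A_def\<close>)
    have "(\<integral>\<^sup>+ k. indicator {0..4} k * ennreal (exp k / (exp 4 - 1)) * ennreal (real (da_cost n k \<alpha> v)) \<partial>lborel)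
        \<le> ennreal (exp 4 / (exp 4 - 1) * lpsi 4)"
    proof (rule ski_bound[OF Z])
      fix k j assume k: "0 \<le> k" "k \<le> 4" and jA: "j \<in> A"
        and mj: "\<forall>i\<in>A. real (the_enat (\<alpha> j)) + k * real (v j) \<le> real (the_enat (\<alpha> i)) + k * real (v i)"
      obtain aj where aj: "\<alpha> j = enat aj" using jA unfolding A_def by auto
      show "real (da_cost n k \<alpha> v) \<le> real (the_enat (\<alpha> j)) + k * real (v j) + real (v j)"
        using da_cost_bound[where \<alpha>=\<alpha> and n=n and j=j and aj=aj and k=k and v=v] P1 P2 jA mj aj k unfolding A_def by force
    qed auto
    also have "\<dots> \<le> ennreal (exp 4 / (exp 4 - 1)) * ennreal_of_enat (Min ((\<lambda>i. \<alpha> i + enat (4 * v i)) ` {..<n}))"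
    proof -
      obtain i where i: "i < n" "Min ((\<lambda>i. \<alpha> i + enat (4 * v i)) ` {..<n}) = \<alpha> i + enat (4 * v i)"
      proof -
        have "Min ((\<lambda>i. \<alpha> i + enat (4 * v i)) ` {..<n}) \<in> (\<lambda>i. \<alpha> i + enat (4 * v i)) ` {..<n}"
          using n by (intro Min_in) (auto simp: lessThan_empty_iff)
        then show ?thesis using that by auto
      qed
      show ?thesis
      proof (cases "\<alpha> i")
        case infinity
        moreover have "ennreal (exp 4 / (exp 4 - 1)) \<noteq> 0" using Z by simp
        ultimately show ?thesis using i by (simp add: ennreal_mult_top)
      next
        case (enat ai)
        then have iA: "i \<in> A" using i unfolding A_def by auto
        have "lpsi 4 \<le> real ai + 4 * real (v i)" using lpsi_le[OF iA, of 4] enat by simp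
        then have "ennreal (exp 4 / (exp 4 - 1) * lpsi 4) \<le> ennreal (exp 4 / (exp 4 - 1) * (real ai + 4 * real (v i)))"
          using Z by (intro ennreal_leI mult_left_mono) auto
        also have "\<dots> = ennreal (exp 4 / (exp 4 - 1)) * ennreal_of_enat (\<alpha> i + enat (4 * v i))"
        proof -
          have e1: "\<alpha> i + enat (4 * v i) = enat (ai + 4 * v i)" using enat by simp
          have e2: "ennreal_of_enat (enat (ai + 4 * v i)) = ennreal (real ai + 4 * real (v i))"
            by (simp only: ennreal_of_enat_enat ennreal_of_nat_eq_real_of_nat of_nat_add of_nat_mult of_nat_numeral)
          show ?thesis unfolding e1 e2 using Z by (intro ennreal_mult) auto
        qed
        finally show ?thesis using i by simp
      qed
    qed
    finally show ?thesis .
  qed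
qed

lemma pa_stop_time_bounds:
  assumes "1 \<le> n"
  shows "1 \<le> pa_stop_time n \<sigma> stop v" "pa_stop_time n \<sigma> stop v \<le> n"
proof -
  let ?P = "\<lambda>t. 1 \<le> t \<and> (stop (map (\<lambda>j. v (\<sigma> j)) [0..<t]) \<or> t = n)"
  have Pn: "?P n" using assms by simp
  show "1 \<le> pa_stop_time n \<sigma> stop v" unfolding pa_stop_time_def using LeastI[of ?P, OF Pn] by simp
  show "pa_stop_time n \<sigma> stop v \<le> n" unfolding pa_stop_time_def by (rule Least_le[of ?P n, OF Pn])
qed

lemma cp_term_le_pa:
  fixes \<sigma> :: "nat \<Rightarrow> nat" and v :: "nat \<Rightarrow> nat"
  assumes n: "1 \<le> n" and \<sigma>: "bij_betw \<sigma> {..<n} {..<n}"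
  defines "y \<equiv> \<lambda>i t. if 1 \<le> t \<and> t \<le> n \<and> \<sigma> (t - 1) = i then 1 else (0::real)"
  shows "(\<Sum>s. (let t = Suc s in
        ennreal (max 0 (1 - (\<Sum>i<n. \<Sum>t'\<in>{t'\<in>{1..n}. real t' < real t - real (v i)}. y i t')))))
     \<le> ennreal (real (pa_cost n \<sigma> stop v))"
proof -
  define st where "st = pa_stop_time n \<sigma> stop v"
  have st: "1 \<le> st" "st \<le> n" using pa_stop_time_bounds[OF n] unfolding st_def by auto
  have "Min ((\<lambda>j. v (\<sigma> j)) ` {..<st}) \<in> (\<lambda>j. v (\<sigma> j)) ` {..<st}"
    using st by (intro Min_in) (auto simp: lessThan_empty_iff)
  then obtain p where p: "p < st" "Min ((\<lambda>j. v (\<sigma> j)) ` {..<st}) = v (\<sigma> p)" by auto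
  define M where "M = p + 1 + v (\<sigma> p)"
  have M_le: "M \<le> pa_cost n \<sigma> stop v" unfolding pa_cost_def st_def[symmetric] p(2) M_def using p by simp
  have term_le: "(let t = Suc s in
        ennreal (max 0 (1 - (\<Sum>i<n. \<Sum>t'\<in>{t'\<in>{1..n}. real t' < real t - real (v i)}. y i t'))))
      \<le> ennreal (if s < M then 1 else 0)" for s
  proof (cases "s < M")
    case True
    have "0 \<le> (\<Sum>i<n. \<Sum>t'\<in>{t'\<in>{1..n}. real t' < real (Suc s) - real (v i)}. y i t')"
      unfolding y_def by (intro sum_nonneg) auto
    then show ?thesis using True by (simp add: Let_def)
  next
    case False
    have sp: "\<sigma> p < n" using \<sigma> p st by (auto simp: bij_betw_def)
    have mem: "p + 1 \<in> {t'\<in>{1..n}. real t' < real (Suc s) - real (v (\<sigma> p))}"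
      using False p st unfolding M_def by auto
    have "1 = y (\<sigma> p) (p + 1)" unfolding y_def using p st by simp
    also have "\<dots> \<le> (\<Sum>t'\<in>{t'\<in>{1..n}. real t' < real (Suc s) - real (v (\<sigma> p))}. y (\<sigma> p) t')"
      using mem by (intro member_le_sum) (auto simp: y_def)
    also have "\<dots> \<le> (\<Sum>i<n. \<Sum>t'\<in>{t'\<in>{1..n}. real t' < real (Suc s) - real (v i)}. y i t')"
      using sp by (intro member_le_sum[where f = "\<lambda>i. \<Sum>t'\<in>{t'\<in>{1..n}. real t' < real (Suc s) - real (v i)}. y i t'"])
        (auto simp: y_def intro!: sum_nonneg)
    finally have "max 0 (1 - (\<Sum>i<n. \<Sum>t'\<in>{t'\<in>{1..n}. real t' < real (Suc s) - real (v i)}. y i t')) = 0"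
      by simp
    then show ?thesis using False by (simp only: Let_def) simp
  qed
  have "(\<Sum>s. (let t = Suc s in
        ennreal (max 0 (1 - (\<Sum>i<n. \<Sum>t'\<in>{t'\<in>{1..n}. real t' < real t - real (v i)}. y i t')))))
      \<le> (\<Sum>s. ennreal (if s < M then 1 else 0))"
    by (intro suminf_le summableI term_le)
  also have "\<dots> = (\<Sum>s<M. ennreal (if s < M then 1 else 0))" by (rule suminf_finite) auto
  also have "\<dots> = ennreal (real M)" by (simp add: ennreal_of_nat_eq_real_of_nat)
  also have "\<dots> \<le> ennreal (real (pa_cost n \<sigma> stop v))" using M_le by (intro ennreal_leI) simp
  finally show ?thesis .
qed

lemma cp_le_OPT:
  assumes n: "1 \<le> n" and opt: "cp_optimal n D x"
  shows "cp_obj n D x \<le> OPT n D"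
  unfolding OPT_def
proof (rule INF_greatest)
  fix q :: "(nat \<Rightarrow> nat) \<times> (nat list \<Rightarrow> bool)" assume "q \<in> {(\<sigma>, stop). bij_betw \<sigma> {..<n} {..<n}}"
  then obtain \<sigma> and stop :: "nat list \<Rightarrow> bool" where q: "q = (\<sigma>, stop)" and \<sigma>: "bij_betw \<sigma> {..<n} {..<n}" by auto
  define y where "y \<equiv> \<lambda>i t. if 1 \<le> t \<and> t \<le> n \<and> \<sigma> (t - 1) = i then 1 else (0::real)"
  have feas: "cp_feasible n y"
    unfolding cp_feasible_def
  proof (intro conjI ballI allI impI)
    fix i t show "0 \<le> y i t" by (simp add: y_def)
  next
    fix t :: nat assume t: "t \<in> {1..n}"
    have "(\<Sum>i<n. y i t) = (\<Sum>i<n. if \<sigma> (t - 1) = i then 1 else 0)"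
      using t unfolding y_def by (intro sum.cong) auto
    also have "\<dots> \<le> 1" by (simp add: sum.delta)
    finally show "(\<Sum>i<n. y i t) \<le> 1" .
  qed
  have "cp_obj n D x \<le> cp_obj n D y" using opt feas unfolding cp_optimal_def by auto
  also have "\<dots> \<le> (\<integral>\<^sup>+ v. ennreal (real (pa_cost n \<sigma> stop v)) \<partial>measure_pmf D)"
    unfolding cp_obj_def y_def by (intro nn_integral_mono cp_term_le_pa[OF n \<sigma>])
  finally show "cp_obj n D x \<le> (\<integral>\<^sup>+ v. ennreal (real (pa_cost n (fst q) (snd q) v)) \<partial>measure_pmf D)"
    using q by simp
qed

lemma space_poisson[simp]: "space (poisson_space n x) = UNIV"
  unfolding poisson_space_def by (simp add: space_PiM PiE_UNIV_domain)

lemma sets_draw[simp]: "sets (measure_pmf (draw_pmf n x \<tau>)) = UNIV" by simp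

lemma comp_meas[measurable]: "(\<lambda>\<omega>. \<omega> \<tau>) \<in> measurable (poisson_space n x) (count_space UNIV)"
proof -
  have "(\<lambda>\<omega>. \<omega> \<tau>) \<in> measurable (poisson_space n x) (measure_pmf (draw_pmf n x \<tau>))"
    unfolding poisson_space_def by (rule measurable_component_singleton) simp
  moreover have "(\<lambda>d. d) \<in> measurable (measure_pmf (draw_pmf n x \<tau>)) (count_space UNIV)" by simp
  ultimately show ?thesis by (rule measurable_compose)
qed

lemma arrival_enat_iff:
  "arrival \<omega> i = enat m \<longleftrightarrow> (1 \<le> m \<and> \<omega> m = Some i \<and> (\<forall>\<tau>. 1 \<le> \<tau> \<and> \<tau> < m \<longrightarrow> \<omega> \<tau> \<noteq> Some i))"
proof
  assume a: "arrival \<omega> i = enat m"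
  then have ex: "\<exists>\<tau>\<ge>1. \<omega> \<tau> = Some i" unfolding arrival_def by (auto split: if_splits)
  then have m: "m = (LEAST \<tau>. 1 \<le> \<tau> \<and> \<omega> \<tau> = Some i)" using a unfolding arrival_def by auto
  from ex obtain \<tau>0 where "1 \<le> \<tau>0 \<and> \<omega> \<tau>0 = Some i" by auto
  then have "1 \<le> m \<and> \<omega> m = Some i" unfolding m by (rule LeastI)
  moreover have "\<forall>\<tau>. 1 \<le> \<tau> \<and> \<tau> < m \<longrightarrow> \<omega> \<tau> \<noteq> Some i"
    unfolding m using not_less_Least by blast
  ultimately show "1 \<le> m \<and> \<omega> m = Some i \<and> (\<forall>\<tau>. 1 \<le> \<tau> \<and> \<tau> < m \<longrightarrow> \<omega> \<tau> \<noteq> Some i)" by blast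
next
  assume r: "1 \<le> m \<and> \<omega> m = Some i \<and> (\<forall>\<tau>. 1 \<le> \<tau> \<and> \<tau> < m \<longrightarrow> \<omega> \<tau> \<noteq> Some i)"
  then have ex: "\<exists>\<tau>\<ge>1. \<omega> \<tau> = Some i" by auto
  have "(LEAST \<tau>. 1 \<le> \<tau> \<and> \<omega> \<tau> = Some i) = m"
    using r by (intro Least_equality) (auto simp: not_less[symmetric])
  then show "arrival \<omega> i = enat m" using ex unfolding arrival_def by simp
qed

lemma arrival_inf_iff: "arrival \<omega> i = \<infinity> \<longleftrightarrow> (\<forall>\<tau>. 1 \<le> \<tau> \<longrightarrow> \<omega> \<tau> \<noteq> Some i)"
  unfolding arrival_def by auto

lemma arrival_P1: "arrival \<omega> i = enat m \<Longrightarrow> 1 \<le> m"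
  by (simp add: arrival_enat_iff)

lemma arrival_P2:
  assumes "arrival \<omega> i = arrival \<omega> l" "arrival \<omega> i \<noteq> \<infinity>"
  shows "i = l"
proof -
  obtain m where m: "arrival \<omega> i = enat m" using assms(2) by (cases "arrival \<omega> i") auto
  then have m': "arrival \<omega> l = enat m" using assms(1) by simp
  have "\<omega> m = Some i" using m by (simp add: arrival_enat_iff)
  moreover have "\<omega> m = Some l" using m' by (simp add: arrival_enat_iff)
  ultimately show ?thesis by simp
qed

lemma arrival_le_iff:
  "arrival \<omega> i + enat c \<le> enat t \<longleftrightarrow> (\<exists>\<tau>. 1 \<le> \<tau> \<and> \<omega> \<tau> = Some i \<and> \<tau> + c \<le> t)"
proof
  assume a: "arrival \<omega> i + enat c \<le> enat t"
  then obtain m where m: "arrival \<omega> i = enat m" by (cases "arrival \<omega> i") auto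
  have "m + c \<le> t" using a m by simp
  moreover have "1 \<le> m \<and> \<omega> m = Some i" using m by (simp add: arrival_enat_iff)
  ultimately show "\<exists>\<tau>. 1 \<le> \<tau> \<and> \<omega> \<tau> = Some i \<and> \<tau> + c \<le> t" by blast
next
  assume "\<exists>\<tau>. 1 \<le> \<tau> \<and> \<omega> \<tau> = Some i \<and> \<tau> + c \<le> t"
  then obtain \<tau> where \<tau>: "1 \<le> \<tau>" "\<omega> \<tau> = Some i" "\<tau> + c \<le> t" by auto
  then have ex: "\<exists>\<tau>\<ge>1. \<omega> \<tau> = Some i" by auto
  have "(LEAST \<tau>. 1 \<le> \<tau> \<and> \<omega> \<tau> = Some i) \<le> \<tau>" using \<tau> by (intro Least_le) auto
  then show "arrival \<omega> i + enat c \<le> enat t" using ex \<tau> unfolding arrival_def by simp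
qed

lemma arrival_meas[measurable]: "(\<lambda>\<omega>. arrival \<omega> i) \<in> measurable (poisson_space n x) (count_space UNIV)"
proof (subst measurable_count_space_eq2_countable, intro conjI ballI)
  show "(\<lambda>\<omega>. arrival \<omega> i) \<in> space (poisson_space n x) \<rightarrow> UNIV" by simp
  fix a :: enat
  show "(\<lambda>\<omega>. arrival \<omega> i) -` {a} \<inter> space (poisson_space n x) \<in> sets (poisson_space n x)"
  proof (cases a)
    case (enat m)
    have "(\<lambda>\<omega>. arrival \<omega> i) -` {a} \<inter> space (poisson_space n x) =
      {\<omega> \<in> space (poisson_space n x). 1 \<le> m \<and> \<omega> m = Some i \<and> (\<forall>\<tau>. 1 \<le> \<tau> \<and> \<tau> < m \<longrightarrow> \<omega> \<tau> \<noteq> Some i)}"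
      using enat by (auto simp: arrival_enat_iff)
    also have "\<dots> \<in> sets (poisson_space n x)" by measurable
    finally show ?thesis .
  next
    case infinity
    have "(\<lambda>\<omega>. arrival \<omega> i) -` {a} \<inter> space (poisson_space n x) =
      {\<omega> \<in> space (poisson_space n x). \<forall>\<tau>. 1 \<le> \<tau> \<longrightarrow> \<omega> \<tau> \<noteq> Some i}"
      using infinity by (auto simp: arrival_inf_iff)
    also have "\<dots> \<in> sets (poisson_space n x)" by measurable
    finally show ?thesis .
  qed
qed

lemma measurable_map_list:
  fixes f :: "'b \<Rightarrow> 'a \<Rightarrow> 'c::countable"
  assumes "\<And>y. y \<in> set ys \<Longrightarrow> (\<lambda>x. f x y) \<in> measurable M (count_space UNIV)"
  shows "(\<lambda>x. map (f x) ys) \<in> measurable M (count_space UNIV)"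
  using assms
proof (induction ys)
  case Nil
  then show ?case by simp
next
  case (Cons y ys)
  have IH: "(\<lambda>x. map (f x) ys) \<in> measurable M (count_space UNIV)" using Cons by simp
  have g: "(\<lambda>x. f x y) \<in> measurable M (count_space UNIV)" using Cons by simp
  have "(\<lambda>x. (\<lambda>c x. c # map (f x) ys) (f x y) x) \<in> measurable M (count_space UNIV)"
  proof (rule measurable_compose_countable[OF _ g])
    fix c :: 'c
    show "(\<lambda>x. c # map (f x) ys) \<in> measurable M (count_space UNIV)"
      using measurable_compose[OF IH, of "Cons c" "count_space UNIV"] by simp
  qed
  then show ?case by simp
qed

lemma AL_meas[measurable]: "(\<lambda>\<omega>. map (arrival \<omega>) [0..<n]) \<in> measurable (poisson_space m x) (count_space UNIV)"
  by (rule measurable_map_list) simp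

lemma xbar_nn: assumes "cp_feasible n x" "i < n" shows "0 \<le> xbar n x i u"
proof -
  have "0 \<le> sum (x i) {1..min u n}" using assms unfolding cp_feasible_def by (intro sum_nonneg) auto
  then show ?thesis unfolding xbar_def by simp
qed

lemma xbar_sum: assumes "cp_feasible n x" shows "(\<Sum>i<n. xbar n x i u) \<le> 1"
proof (cases "u = 0")
  case True then show ?thesis by (simp add: xbar_def)
next
  case False
  have "(\<Sum>i<n. xbar n x i u) = (1 / real u) * (\<Sum>i<n. \<Sum>t'\<in>{1..min u n}. x i t')"
    unfolding xbar_def by (simp add: sum_distrib_left)
  also have "\<dots> = (1 / real u) * (\<Sum>t'\<in>{1..min u n}. \<Sum>i<n. x i t')"
    by (subst sum.swap) (rule refl)
  also have "\<dots> \<le> (1 / real u) * (\<Sum>t'\<in>{1..min u n}. 1)"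
    using assms unfolding cp_feasible_def by (intro mult_left_mono sum_mono) auto
  also have "\<dots> = real (min u n) / real u" by simp
  also have "\<dots> \<le> 1" using False by (simp add: divide_le_eq_1)
  finally show ?thesis .
qed

lemma pmf_draw:
  assumes feas: "cp_feasible n x"
  shows "pmf (draw_pmf n x \<tau>) d = (case d of None \<Rightarrow> 1 - (\<Sum>i<n. xbar n x i ((\<tau> + 1) div 2))
     | Some i \<Rightarrow> (if i < n then xbar n x i ((\<tau> + 1) div 2) else 0))"
  unfolding draw_pmf_def
proof (rule pmf_embed_pmf)
  let ?f = "\<lambda>d. case d of None \<Rightarrow> 1 - (\<Sum>i<n. xbar n x i ((\<tau> + 1) div 2))
     | Some i \<Rightarrow> (if i < n then xbar n x i ((\<tau> + 1) div 2) else 0)"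
  show "0 \<le> ?f d" for d
    using xbar_sum[OF feas] xbar_nn[OF feas] by (cases d) auto
  have "(\<integral>\<^sup>+ d. ennreal (?f d) \<partial>count_space UNIV) = (\<Sum>d\<in>insert None (Some ` {..<n}). ennreal (?f d))"
    by (rule nn_integral_count_space') auto
  also have "\<dots> = ennreal (\<Sum>d\<in>insert None (Some ` {..<n}). ?f d)"
    using xbar_sum[OF feas] xbar_nn[OF feas] by (intro sum_ennreal) (auto split: option.splits)
  also have "(\<Sum>d\<in>insert None (Some ` {..<n}). ?f d) = ?f None + (\<Sum>d\<in>Some ` {..<n}. ?f d)"
    by (subst sum.insert) auto
  also have "(\<Sum>d\<in>Some ` {..<n}. ?f d) = (\<Sum>i<n. ?f (Some i))"
    by (subst sum.reindex) auto
  also have "?f None + (\<Sum>i<n. ?f (Some i)) = 1" by simp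
  finally show "(\<integral>\<^sup>+ d. ennreal (?f d) \<partial>count_space UNIV) = 1" by simp
qed

lemma emeasure_draw_compl:
  assumes feas: "cp_feasible n x" and B: "B \<subseteq> {..<n}"
  shows "emeasure (measure_pmf (draw_pmf n x \<tau>)) (UNIV - Some ` B)
    = ennreal (1 - (\<Sum>i\<in>B. xbar n x i ((\<tau> + 1) div 2)))"
proof -
  have fin: "finite B" using B finite_subset by blast
  have "measure (measure_pmf (draw_pmf n x \<tau>)) (Some ` B) = (\<Sum>d\<in>Some ` B. pmf (draw_pmf n x \<tau>) d)"
    using fin by (intro measure_measure_pmf_finite) auto
  also have "\<dots> = (\<Sum>i\<in>B. pmf (draw_pmf n x \<tau>) (Some i))" by (subst sum.reindex) auto
  also have "\<dots> = (\<Sum>i\<in>B. xbar n x i ((\<tau> + 1) div 2))"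
    using B by (intro sum.cong) (auto simp: pmf_draw[OF feas])
  finally have m: "measure (measure_pmf (draw_pmf n x \<tau>)) (Some ` B) = (\<Sum>i\<in>B. xbar n x i ((\<tau> + 1) div 2))" .
  have "emeasure (measure_pmf (draw_pmf n x \<tau>)) (UNIV - Some ` B)
      = ennreal (measure (measure_pmf (draw_pmf n x \<tau>)) (UNIV - Some ` B))"
    by (simp add: measure_pmf.emeasure_eq_measure)
  also have "measure (measure_pmf (draw_pmf n x \<tau>)) (UNIV - Some ` B) = 1 - measure (measure_pmf (draw_pmf n x \<tau>)) (Some ` B)"
    using measure_pmf.prob_compl[of "Some ` B" "draw_pmf n x \<tau>"] by simp
  finally show ?thesis using m by simp
qed

lemma prod_le_exp:
  fixes z :: "nat \<Rightarrow> real"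
  assumes "\<And>\<tau>. \<tau> \<in> T \<Longrightarrow> 0 \<le> z \<tau> \<and> z \<tau> \<le> 1"
  shows "(\<Prod>\<tau>\<in>T. (1 - z \<tau>)) \<le> exp (- (\<Sum>\<tau>\<in>T. z \<tau>))"
proof -
  have "(\<Prod>\<tau>\<in>T. (1 - z \<tau>)) \<le> (\<Prod>\<tau>\<in>T. exp (- z \<tau>))"
    using assms by (intro prod_mono) (auto simp: add.commute[of 1] intro: order.trans[OF _ exp_ge_add_one_self])
  also have "\<dots> = exp (- (\<Sum>\<tau>\<in>T. z \<tau>))"
  proof (cases "finite T")
    case True then show ?thesis by (simp add: exp_sum sum_negf[symmetric])
  next
    case False then show ?thesis by simp
  qed
  finally show ?thesis .
qed

definition Gv :: "nat \<Rightarrow> (nat \<Rightarrow> nat) \<Rightarrow> (nat \<Rightarrow> nat option) \<Rightarrow> enat" where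
  "Gv n v \<omega> = Min ((\<lambda>i. arrival \<omega> i + enat (4 * v i)) ` {..<n})"

lemma Gv_event:
  assumes n: "1 \<le> n"
  shows "{\<omega> \<in> space (poisson_space n x). enat t < Gv n v \<omega>}
    = prod_emb UNIV (\<lambda>\<tau>. measure_pmf (draw_pmf n x \<tau>)) {1..t}
        (PiE {1..t} (\<lambda>\<tau>. UNIV - Some ` {i. i < n \<and> \<tau> + 4 * v i \<le> t}))"
proof -
  have ne: "(\<lambda>i. arrival \<omega> i + enat (4 * v i)) ` {..<n} \<noteq> {}" for \<omega> using n by (auto simp: lessThan_empty_iff)
  have "enat t < Gv n v \<omega> \<longleftrightarrow> (\<forall>\<tau>\<in>{1..t}. \<omega> \<tau> \<in> UNIV - Some ` {i. i < n \<and> \<tau> + 4 * v i \<le> t})" for \<omega>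
  proof -
    have "enat t < Gv n v \<omega> \<longleftrightarrow> (\<forall>i<n. \<not> arrival \<omega> i + enat (4 * v i) \<le> enat t)"
      unfolding Gv_def using ne[of \<omega>] by (auto simp: Min_gr_iff not_le)
    also have "\<dots> \<longleftrightarrow> (\<forall>i<n. \<not> (\<exists>\<tau>. 1 \<le> \<tau> \<and> \<omega> \<tau> = Some i \<and> \<tau> + 4 * v i \<le> t))"
      by (simp only: arrival_le_iff)
    also have "\<dots> \<longleftrightarrow> (\<forall>\<tau>\<in>{1..t}. \<omega> \<tau> \<in> UNIV - Some ` {i. i < n \<and> \<tau> + 4 * v i \<le> t})"
      by auto
    finally show ?thesis .
  qed
  moreover have "prod_emb UNIV (\<lambda>\<tau>. measure_pmf (draw_pmf n x \<tau>)) {1..t}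
        (PiE {1..t} (\<lambda>\<tau>. UNIV - Some ` {i. i < n \<and> \<tau> + 4 * v i \<le> t}))
     = {\<omega>. \<forall>\<tau>\<in>{1..t}. \<omega> \<tau> \<in> UNIV - Some ` {i. i < n \<and> \<tau> + 4 * v i \<le> t}}"
    unfolding prod_emb_def by (auto simp: space_PiM PiE_UNIV_domain vimage_def restrict_PiE_iff simp del: Diff_iff)
  ultimately show ?thesis by simp
qed

lemma Gv_prob:
  assumes n: "1 \<le> n" and feas: "cp_feasible n x"
  shows "emeasure (poisson_space n x) {\<omega> \<in> space (poisson_space n x). enat t < Gv n v \<omega>}
    \<le> ennreal (exp (- (\<Sum>\<tau>\<in>{1..t}. \<Sum>i\<in>{i. i < n \<and> \<tau> + 4 * v i \<le> t}. xbar n x i ((\<tau> + 1) div 2))))"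
proof -
  interpret P: product_prob_space "\<lambda>\<tau>. measure_pmf (draw_pmf n x \<tau>)" UNIV
    by unfold_locales
  let ?z = "\<lambda>\<tau>. \<Sum>i\<in>{i. i < n \<and> \<tau> + 4 * v i \<le> t}. xbar n x i ((\<tau> + 1) div 2)"
  have z: "0 \<le> ?z \<tau> \<and> ?z \<tau> \<le> 1" for \<tau>
  proof
    show "0 \<le> ?z \<tau>" using xbar_nn[OF feas] by (intro sum_nonneg) auto
    have "?z \<tau> \<le> (\<Sum>i<n. xbar n x i ((\<tau> + 1) div 2))"
      using xbar_nn[OF feas] by (intro sum_mono2) auto
    then show "?z \<tau> \<le> 1" using xbar_sum[OF feas] by (rule order.trans)
  qed
  have "emeasure (poisson_space n x) {\<omega> \<in> space (poisson_space n x). enat t < Gv n v \<omega>}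
      = (\<Prod>\<tau>\<in>{1..t}. emeasure (measure_pmf (draw_pmf n x \<tau>)) (UNIV - Some ` {i. i < n \<and> \<tau> + 4 * v i \<le> t}))"
    unfolding Gv_event[OF n, of x t v] unfolding poisson_space_def by (rule P.emeasure_PiM_emb) auto
  also have "\<dots> = (\<Prod>\<tau>\<in>{1..t}. ennreal (1 - ?z \<tau>))"
    by (intro prod.cong refl emeasure_draw_compl[OF feas]) auto
  also have "\<dots> = ennreal (\<Prod>\<tau>\<in>{1..t}. (1 - ?z \<tau>))"
    using z by (intro prod_ennreal) auto
  also have "\<dots> \<le> ennreal (exp (- (\<Sum>\<tau>\<in>{1..t}. ?z \<tau>)))"
    using z by (intro ennreal_leI prod_le_exp) auto
  finally show ?thesis .
qed

lemma xbar_as_sum: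
  assumes "1 \<le> u"
  shows "xbar n x i u = (\<Sum>t'\<in>{1..n}. if t' \<le> u then x i t' / real u else 0)"
proof -
  have "{1..min u n} = {t'\<in>{1..n}. t' \<le> u}" by auto
  then have "xbar n x i u = (1 / real u) * (\<Sum>t'\<in>{t'\<in>{1..n}. t' \<le> u}. x i t')"
    unfolding xbar_def by simp
  also have "\<dots> = (1 / real u) * (\<Sum>t'\<in>{1..n}. if t' \<le> u then x i t' else 0)"
    by (subst sum.inter_filter) simp_all
  also have "\<dots> = (\<Sum>t'\<in>{1..n}. if t' \<le> u then x i t' / real u else 0)"
    unfolding sum_distrib_left by (intro sum.cong) auto
  finally show ?thesis .
qed

lemma F_eq:
  "(\<Sum>\<tau>\<in>{1..t}. \<Sum>i\<in>{i. i < n \<and> \<tau> + 4 * v i \<le> t}. xbar n x i ((\<tau> + 1) div 2))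
   = (\<Sum>j\<in>{..<n} \<times> {1..n}. (case j of (i, t') \<Rightarrow> x i t') * (case j of (i, t') \<Rightarrow> psi t' (t - 4 * v i)))"
proof -
  let ?u = "\<lambda>\<tau>::nat. (\<tau> + 1) div 2"
  let ?g = "\<lambda>\<tau> i t'. if \<tau> + 4 * v i \<le> t \<and> t' \<le> ?u \<tau> then x i t' / real (?u \<tau>) else 0"
  have "(\<Sum>\<tau>\<in>{1..t}. \<Sum>i\<in>{i. i < n \<and> \<tau> + 4 * v i \<le> t}. xbar n x i (?u \<tau>))
      = (\<Sum>\<tau>\<in>{1..t}. \<Sum>i<n. \<Sum>t'\<in>{1..n}. ?g \<tau> i t')"
  proof (rule sum.cong[OF refl])
    fix \<tau> assume \<tau>: "\<tau> \<in> {1..t}"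
    then have u: "1 \<le> ?u \<tau>" by auto
    have xu: "xbar n x i (?u \<tau>) = (\<Sum>t'\<in>{1..n}. if t' \<le> ?u \<tau> then x i t' / real (?u \<tau>) else 0)" for i
      by (rule xbar_as_sum[OF u])
    have eq: "{i. i < n \<and> \<tau> + 4 * v i \<le> t} = {i\<in>{..<n}. \<tau> + 4 * v i \<le> t}" by auto
    have "(\<Sum>i\<in>{i. i < n \<and> \<tau> + 4 * v i \<le> t}. xbar n x i (?u \<tau>))
        = (\<Sum>i<n. if \<tau> + 4 * v i \<le> t then xbar n x i (?u \<tau>) else 0)"
      unfolding eq by (rule sum.inter_filter) simp
    also have "\<dots> = (\<Sum>i<n. \<Sum>t'\<in>{1..n}. ?g \<tau> i t')"
      using xu by (intro sum.cong refl) auto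
    finally show "(\<Sum>i\<in>{i. i < n \<and> \<tau> + 4 * v i \<le> t}. xbar n x i (?u \<tau>)) = (\<Sum>i<n. \<Sum>t'\<in>{1..n}. ?g \<tau> i t')" .
  qed
  also have "\<dots> = (\<Sum>i<n. \<Sum>\<tau>\<in>{1..t}. \<Sum>t'\<in>{1..n}. ?g \<tau> i t')" by (rule sum.swap)
  also have "\<dots> = (\<Sum>i<n. \<Sum>t'\<in>{1..n}. \<Sum>\<tau>\<in>{1..t}. ?g \<tau> i t')" by (intro sum.cong refl sum.swap)
  also have "\<dots> = (\<Sum>i<n. \<Sum>t'\<in>{1..n}. x i t' * psi t' (t - 4 * v i))"
  proof (intro sum.cong refl)
    fix i t'
    have eq: "{\<tau>\<in>{1..t}. \<tau> + 4 * v i \<le> t \<and> t' \<le> ?u \<tau>} = {\<tau>\<in>{1..t - 4 * v i}. t' \<le> ?u \<tau>}" by auto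
    have "(\<Sum>\<tau>\<in>{1..t}. ?g \<tau> i t') = (\<Sum>\<tau>\<in>{\<tau>\<in>{1..t}. \<tau> + 4 * v i \<le> t \<and> t' \<le> ?u \<tau>}. x i t' / real (?u \<tau>))"
      by (rule sum.inter_filter[symmetric]) simp
    also have "\<dots> = (\<Sum>\<tau>\<in>{\<tau>\<in>{1..t - 4 * v i}. t' \<le> ?u \<tau>}. x i t' / real (?u \<tau>))"
      unfolding eq ..
    also have "\<dots> = x i t' * psi t' (t - 4 * v i)"
      unfolding psi_def by (simp add: sum_distrib_left)
    finally show "(\<Sum>\<tau>\<in>{1..t}. ?g \<tau> i t') = x i t' * psi t' (t - 4 * v i)" .
  qed
  also have "\<dots> = (\<Sum>j\<in>{..<n} \<times> {1..n}. (case j of (i, t') \<Rightarrow> x i t') * (case j of (i, t') \<Rightarrow> psi t' (t - 4 * v i)))"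
    by (simp add: sum.cartesian_product split_beta)
  finally show ?thesis .
qed

lemma cpsum_eq:
  "(\<Sum>i<n. \<Sum>t'\<in>{t'\<in>{1..n}. real t' < real (Suc s) - real (v i)}. x i t')
   = (\<Sum>j\<in>{..<n} \<times> {1..n}. if (case j of (i, t') \<Rightarrow> t' + v i) \<le> s then (case j of (i, t') \<Rightarrow> x i t') else 0)"
proof -
  have "(\<Sum>i<n. \<Sum>t'\<in>{t'\<in>{1..n}. real t' < real (Suc s) - real (v i)}. x i t')
      = (\<Sum>i<n. \<Sum>t'\<in>{1..n}. if t' + v i \<le> s then x i t' else 0)"
  proof (rule sum.cong[OF refl])
    fix i
    have eq: "{t'\<in>{1..n}. real t' < real (Suc s) - real (v i)} = {t'\<in>{1..n}. t' + v i \<le> s}" by auto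
    show "(\<Sum>t'\<in>{t'\<in>{1..n}. real t' < real (Suc s) - real (v i)}. x i t') = (\<Sum>t'\<in>{1..n}. if t' + v i \<le> s then x i t' else 0)"
      unfolding eq by (rule sum.inter_filter) simp
  qed
  also have "\<dots> = (\<Sum>j\<in>{..<n} \<times> {1..n}. if (case j of (i, t') \<Rightarrow> t' + v i) \<le> s then (case j of (i, t') \<Rightarrow> x i t') else 0)"
    by (simp add: sum.cartesian_product) (intro sum.cong refl, auto)
  finally show ?thesis .
qed

lemma Gv_alt: "Gv n v \<omega> = (\<lambda>al. Min ((\<lambda>i. al ! i + enat (4 * v i)) ` {..<n})) (map (arrival \<omega>) [0..<n])"
  unfolding Gv_def by (intro arg_cong[where f = Min] image_cong) auto

lemma Gv_meas[measurable]: "(\<lambda>\<omega>. Gv n v \<omega>) \<in> measurable (poisson_space n x) (count_space UNIV)"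
  unfolding Gv_alt by (rule measurable_compose[OF AL_meas]) simp

lemma G_integral_bound:
  assumes n: "1 \<le> n" and feas: "cp_feasible n x"
  shows "(\<integral>\<^sup>+ \<omega>. ennreal_of_enat (Gv n v \<omega>) \<partial>poisson_space n x)
    \<le> 4 * (\<Sum>s. (let t = Suc s in
        ennreal (max 0 (1 - (\<Sum>i<n. \<Sum>t'\<in>{t'\<in>{1..n}. real t' < real t - real (v i)}. x i t')))))"
proof -
  let ?J = "{..<n} \<times> {1..n}"
  let ?w = "\<lambda>j. case j of (i, t') \<Rightarrow> x i t'"
  let ?a = "\<lambda>j. case j of (i, t') \<Rightarrow> t' + v i"
  let ?\<phi> = "\<lambda>j t. case j of (i, t') \<Rightarrow> psi t' (t - 4 * v i)"
  have "(\<integral>\<^sup>+ \<omega>. ennreal_of_enat (Gv n v \<omega>) \<partial>poisson_space n x)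
      = (\<Sum>t. emeasure (poisson_space n x) {\<omega> \<in> space (poisson_space n x). enat t < Gv n v \<omega>})"
    by (rule nn_integral_enat_function) measurable
  also have "\<dots> \<le> (\<Sum>t. ennreal (exp (- (\<Sum>j\<in>?J. ?w j * ?\<phi> j t))))"
  proof (intro suminf_le summableI)
    fix t
    show "emeasure (poisson_space n x) {\<omega> \<in> space (poisson_space n x). enat t < Gv n v \<omega>}
        \<le> ennreal (exp (- (\<Sum>j\<in>?J. ?w j * ?\<phi> j t)))"
      using Gv_prob[OF n feas, of t v] unfolding F_eq by simp
  qed
  also have "\<dots> \<le> 4 * (\<Sum>s. ennreal (max 0 (1 - (\<Sum>j\<in>?J. if ?a j \<le> s then ?w j else 0))))"
  proof (rule jensen_bound)
    show "finite ?J" by simp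
    fix j assume j: "j \<in> ?J"
    then obtain i t' where it: "j = (i, t')" "i < n" "1 \<le> t'" "t' \<le> n" by auto
    show "0 \<le> ?w j" using feas it unfolding cp_feasible_def by auto
    show "0 \<le> ?\<phi> j t" for t using it psi_nonneg by simp
    have "(\<Sum>t. ennreal (exp (- psi t' (t - 4 * v i)))) \<le> ennreal (4 * real t' + real (4 * v i))"
      by (rule atom_bound) (use it in simp)
    also have "\<dots> = ennreal (4 * real (?a j))" using it by simp
    finally show "(\<Sum>t. ennreal (exp (- ?\<phi> j t))) \<le> ennreal (4 * real (?a j))" using it by simp
  qed
  also have "\<dots> = 4 * (\<Sum>s. (let t = Suc s in
        ennreal (max 0 (1 - (\<Sum>i<n. \<Sum>t'\<in>{t'\<in>{1..n}. real t' < real t - real (v i)}. x i t')))))"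
    by (simp only: Let_def cpsum_eq)
  finally show ?thesis .
qed

definition dcost :: "nat \<Rightarrow> nat list \<Rightarrow> (nat \<Rightarrow> enat) \<Rightarrow> (nat \<Rightarrow> nat) \<Rightarrow> nat" where
  "dcost n dl \<alpha> v =
    (let T = Min ((\<lambda>i. \<alpha> i + enat (dl ! i)) ` {..<n});
         m = (case T of enat t \<Rightarrow> min t n | \<infinity> \<Rightarrow> n);
         S = {i. i < n \<and> card {j. j < n \<and> (\<alpha> j < \<alpha> i \<or> (\<alpha> j = \<alpha> i \<and> j < i))} < m}
     in m + Min (v ` S))"

lemma da_cost_dcost: "da_cost n k \<alpha> v = dcost n (map (\<lambda>i. nat \<lfloor>k * real (v i)\<rfloor>) [0..<n]) \<alpha> v"
proof -
  have "(\<lambda>i. \<alpha> i + enat (nat \<lfloor>k * real (v i)\<rfloor>)) ` {..<n} =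
        (\<lambda>i. \<alpha> i + enat (map (\<lambda>i. nat \<lfloor>k * real (v i)\<rfloor>) [0..<n] ! i)) ` {..<n}"
    by (intro image_cong) auto
  then show ?thesis unfolding da_cost_def dcost_def by simp
qed

lemma dcost_cong:
  assumes "\<And>i. i < n \<Longrightarrow> \<alpha> i = \<alpha>' i" "\<And>i. i < n \<Longrightarrow> v i = v' i"
  shows "dcost n dl \<alpha> v = dcost n dl \<alpha>' v'"
proof -
  have T: "(\<lambda>i. \<alpha> i + enat (dl ! i)) ` {..<n} = (\<lambda>i. \<alpha>' i + enat (dl ! i)) ` {..<n}"
    using assms by (intro image_cong) auto
  have S: "{i. i < n \<and> card {j. j < n \<and> (\<alpha> j < \<alpha> i \<or> (\<alpha> j = \<alpha> i \<and> j < i))} < m} =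
           {i. i < n \<and> card {j. j < n \<and> (\<alpha>' j < \<alpha>' i \<or> (\<alpha>' j = \<alpha>' i \<and> j < i))} < m}" for m
  proof (rule Collect_cong)
    fix i
    have "i < n \<Longrightarrow> {j. j < n \<and> (\<alpha> j < \<alpha> i \<or> (\<alpha> j = \<alpha> i \<and> j < i))} = {j. j < n \<and> (\<alpha>' j < \<alpha>' i \<or> (\<alpha>' j = \<alpha>' i \<and> j < i))}"
      using assms by (intro Collect_cong) auto
    then show "(i < n \<and> card {j. j < n \<and> (\<alpha> j < \<alpha> i \<or> (\<alpha> j = \<alpha> i \<and> j < i))} < m) =
               (i < n \<and> card {j. j < n \<and> (\<alpha>' j < \<alpha>' i \<or> (\<alpha>' j = \<alpha>' i \<and> j < i))} < m)"
      by (cases "i < n") (simp_all only: simp_thms)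
  qed
  have V: "v ` {i. i < n \<and> P i} = v' ` {i. i < n \<and> P i}" for P
    using assms by (intro image_cong) auto
  show ?thesis unfolding dcost_def Let_def T S V ..
qed

lemma meas_countable3:
  fixes F :: "'a::countable \<Rightarrow> 'b::countable \<Rightarrow> 'c::countable \<Rightarrow> 'd::topological_space"
  assumes a: "a \<in> measurable M (count_space UNIV)" and b: "b \<in> measurable M (count_space UNIV)"
    and c: "c \<in> measurable M (count_space UNIV)"
  shows "(\<lambda>x. F (a x) (b x) (c x)) \<in> borel_measurable M"
proof -
  have "(\<lambda>x. (\<lambda>a0 x. F a0 (b x) (c x)) (a x) x) \<in> borel_measurable M"
  proof (rule measurable_compose_countable[OF _ a])
    fix a0
    show "(\<lambda>x. F a0 (b x) (c x)) \<in> borel_measurable M"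
    proof -
      have "(\<lambda>x. (\<lambda>b0 x. F a0 b0 (c x)) (b x) x) \<in> borel_measurable M"
      proof (rule measurable_compose_countable[OF _ b])
        fix b0
        show "(\<lambda>x. F a0 b0 (c x)) \<in> borel_measurable M"
          using measurable_compose[OF c, of "F a0 b0" borel] by simp
      qed
      then show ?thesis by simp
    qed
  qed
  then show ?thesis by simp
qed

lemma C_meas:
  assumes K: "K \<in> borel_measurable M" and A: "AL \<in> measurable M (count_space UNIV)"
    and V: "VL \<in> measurable M (count_space UNIV)"
  shows "(\<lambda>x. ennreal (real (da_cost n (K x) (\<lambda>i. AL x ! i) (\<lambda>i. (VL x :: nat list) ! i)))) \<in> borel_measurable M"
proof -
  define DL where "DL x = map (\<lambda>i. nat \<lfloor>K x * real (VL x ! i)\<rfloor>) [0..<n]" for x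
  have DL: "DL \<in> measurable M (count_space UNIV)"
  proof -
    have "(\<lambda>x. (\<lambda>vl x. map (\<lambda>i. nat \<lfloor>K x * real (vl ! i)\<rfloor>) [0..<n]) (VL x) x) \<in> measurable M (count_space UNIV)"
    proof (rule measurable_compose_countable[OF _ V])
      fix vl :: "nat list"
      show "(\<lambda>x. map (\<lambda>i. nat \<lfloor>K x * real (vl ! i)\<rfloor>) [0..<n]) \<in> measurable M (count_space UNIV)"
      proof (rule measurable_map_list)
        fix i
        have "(\<lambda>k::real. nat \<lfloor>k * real (vl ! i)\<rfloor>) \<in> measurable borel (count_space UNIV)" by measurable
        then show "(\<lambda>x. nat \<lfloor>K x * real (vl ! i)\<rfloor>) \<in> measurable M (count_space UNIV)"
          using measurable_compose[OF K] by blast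
      qed
    qed
    then show ?thesis unfolding DL_def by simp
  qed
  have "(\<lambda>x. (\<lambda>dl al vl. ennreal (real (dcost n dl (\<lambda>i. al ! i) (\<lambda>i. (vl :: nat list) ! i)))) (DL x) (AL x :: enat list) (VL x)) \<in> borel_measurable M"
    by (rule meas_countable3[OF DL A V])
  then show ?thesis unfolding DL_def da_cost_dcost by simp
qed

lemma da_cost_lists: "da_cost n k \<alpha> v = da_cost n k (\<lambda>i. map \<alpha> [0..<n] ! i) (\<lambda>i. map v [0..<n] ! i)"
proof -
  have "map (\<lambda>i. nat \<lfloor>k * real (v i)\<rfloor>) [0..<n] = map (\<lambda>i. nat \<lfloor>k * real (map v [0..<n] ! i)\<rfloor>) [0..<n]"
    by (intro map_cong) auto
  then have "da_cost n k \<alpha> v = dcost n (map (\<lambda>i. nat \<lfloor>k * real (map v [0..<n] ! i)\<rfloor>) [0..<n]) \<alpha> v"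
    unfolding da_cost_dcost by (rule arg_cong[where f = "\<lambda>dl. dcost n dl \<alpha> v"])
  also have "\<dots> = dcost n (map (\<lambda>i. nat \<lfloor>k * real (map v [0..<n] ! i)\<rfloor>) [0..<n]) (\<lambda>i. map \<alpha> [0..<n] ! i) (\<lambda>i. map v [0..<n] ! i)"
    by (rule dcost_cong) auto
  also have "\<dots> = da_cost n k (\<lambda>i. map \<alpha> [0..<n] ! i) (\<lambda>i. map v [0..<n] ! i)"
    unfolding da_cost_dcost[of n k "\<lambda>i. map \<alpha> [0..<n] ! i"] ..
  finally show ?thesis .
qed

lemma VL_meas: "(\<lambda>p. map (snd p) [0..<n]) \<in> measurable (M \<Otimes>\<^sub>M measure_pmf D) (count_space UNIV)"
proof -
  have "(\<lambda>v. map v [0..<n]) \<in> measurable (measure_pmf D) (count_space UNIV)" by simp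
  then show ?thesis using measurable_compose[OF measurable_snd] by blast
qed

lemma C_meas_gen:
  assumes K: "K \<in> borel_measurable M" and W: "W \<in> measurable M (poisson_space n x)"
    and V: "(\<lambda>p. map (VV p) [0..<n]) \<in> measurable M (count_space UNIV)"
  shows "(\<lambda>p. ennreal (real (da_cost n (K p) (arrival (W p)) (VV p)))) \<in> borel_measurable M"
proof -
  have A: "(\<lambda>p. map (arrival (W p)) [0..<n]) \<in> measurable M (count_space UNIV)"
    using measurable_compose[OF W AL_meas] by simp
  show ?thesis
    unfolding da_cost_lists[of n _ "arrival _"] by (rule C_meas[OF K A V])
qed

lemma Gv_meas_gen:
  assumes W: "W \<in> measurable M (poisson_space n x)"
    and V: "(\<lambda>p. map (VV p) [0..<n]) \<in> measurable M (count_space UNIV)"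
  shows "(\<lambda>p. ennreal_of_enat (Gv n (VV p) (W p))) \<in> borel_measurable M"
proof -
  have A: "(\<lambda>p. map (arrival (W p)) [0..<n]) \<in> measurable M (count_space UNIV)"
    using measurable_compose[OF W AL_meas] by simp
  have eq: "Gv n (VV p) (W p) = (\<lambda>al vl (u::unit). Min ((\<lambda>i. (al :: enat list) ! i + enat (4 * ((vl :: nat list) ! i))) ` {..<n}))
      (map (arrival (W p)) [0..<n]) (map (VV p) [0..<n]) ()" for p
    unfolding Gv_def by (intro arg_cong[where f = Min] image_cong) auto
  have "(\<lambda>p. (\<lambda>al vl u. ennreal_of_enat (Min ((\<lambda>i. (al :: enat list) ! i + enat (4 * ((vl :: nat list) ! i))) ` {..<n})))
      (map (arrival (W p)) [0..<n]) (map (VV p) [0..<n]) ()) \<in> borel_measurable M"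
    by (rule meas_countable3[OF A V]) simp
  then show ?thesis unfolding eq by simp
qed

theorem theoremA1:
  fixes n :: nat and D :: "(nat \<Rightarrow> nat) pmf" and x :: "nat \<Rightarrow> nat \<Rightarrow> real"
  assumes "1 \<le> n"
    and "\<forall>v\<in>set_pmf D. \<forall>i<n. 0 < v i \<and> even (v i)"
    and "cp_optimal n D x"
  shows "alg_value n D x \<le> ennreal (4 * exp 4 / (exp 4 - 1)) * OPT n D"
proof -
  note n = assms(1)
  have feas: "cp_feasible n x" using assms(3) unfolding cp_optimal_def by simp
  define P where "P = poisson_space n x"
  interpret PP: prob_space P unfolding P_def poisson_space_def
    by (intro prob_space_PiM) (simp add: prob_space_measure_pmf)
  interpret lP: pair_sigma_finite lborel P by unfold_locales
  interpret lD: pair_sigma_finite lborel "measure_pmf D" by unfold_locales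
  interpret PD: pair_sigma_finite P "measure_pmf D" by unfold_locales
  define f :: "real \<Rightarrow> ennreal" where "f k = indicator {0..4} k * ennreal (exp k / (exp 4 - 1))" for k
  define C where "C k \<omega> v = ennreal (real (da_cost n k (arrival \<omega>) v))" for k \<omega> v
  define G where "G \<omega> v = ennreal_of_enat (Gv n v \<omega>)" for \<omega> v
  define c0 where "c0 = ennreal (exp 4 / (exp 4 - 1))"
  have f_meas[measurable]: "f \<in> borel_measurable lborel" unfolding f_def by measurable
  have MC1: "(\<lambda>p. C (fst (fst p)) (snd (fst p)) (snd p)) \<in> borel_measurable ((lborel \<Otimes>\<^sub>M P) \<Otimes>\<^sub>M measure_pmf D)"
    unfolding C_def P_def by (rule C_meas_gen[OF _ _ VL_meas]) measurable
  have MC2: "(\<lambda>p. C (fst p) \<omega> (snd p)) \<in> borel_measurable (lborel \<Otimes>\<^sub>M measure_pmf D)" for \<omega>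
    unfolding C_def P_def by (rule C_meas_gen[OF _ _ VL_meas]) measurable
  have MC3: "(\<lambda>p. C k (fst p) (snd p)) \<in> borel_measurable (P \<Otimes>\<^sub>M measure_pmf D)" for k
    unfolding C_def P_def by (rule C_meas_gen[OF _ _ VL_meas]) measurable
  have MG: "(\<lambda>p. G (fst p) (snd p)) \<in> borel_measurable (P \<Otimes>\<^sub>M measure_pmf D)"
    unfolding G_def P_def by (rule Gv_meas_gen[OF _ VL_meas]) measurable
  define H where "H k \<omega> = (\<integral>\<^sup>+ v. C k \<omega> v \<partial>measure_pmf D)" for k \<omega>
  have H1: "H k \<in> borel_measurable P" for k
    unfolding H_def using measure_pmf.borel_measurable_nn_integral_fst[OF MC3[of k]] by simp
  have H2: "(\<lambda>p. H (fst p) (snd p)) \<in> borel_measurable (lborel \<Otimes>\<^sub>M P)"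
    unfolding H_def using measure_pmf.borel_measurable_nn_integral_fst[OF MC1] by simp
  have alg: "alg_value n D x = (\<integral>\<^sup>+ k. f k * (\<integral>\<^sup>+ \<omega>. H k \<omega> \<partial>P) \<partial>lborel)"
    unfolding alg_value_def f_def H_def C_def P_def ..
  also have "\<dots> = (\<integral>\<^sup>+ k. (\<integral>\<^sup>+ \<omega>. f k * H k \<omega> \<partial>P) \<partial>lborel)"
    by (intro nn_integral_cong nn_integral_cmult[symmetric] H1)
  also have "\<dots> = (\<integral>\<^sup>+ \<omega>. (\<integral>\<^sup>+ k. f k * H k \<omega> \<partial>lborel) \<partial>P)"
  proof (rule lP.Fubini'[symmetric])
    show "(\<lambda>(k, \<omega>). f k * H k \<omega>) \<in> borel_measurable (lborel \<Otimes>\<^sub>M P)"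
      using H2 by (simp add: split_beta') measurable
  qed
  also have "\<dots> \<le> (\<integral>\<^sup>+ \<omega>. (\<integral>\<^sup>+ v. c0 * G \<omega> v \<partial>measure_pmf D) \<partial>P)"
  proof (intro nn_integral_mono)
    fix \<omega>
    have "(\<integral>\<^sup>+ k. f k * H k \<omega> \<partial>lborel) = (\<integral>\<^sup>+ k. (\<integral>\<^sup>+ v. f k * C k \<omega> v \<partial>measure_pmf D) \<partial>lborel)"
      unfolding H_def by (intro nn_integral_cong nn_integral_cmult[symmetric]) simp
    also have "\<dots> = (\<integral>\<^sup>+ v. (\<integral>\<^sup>+ k. f k * C k \<omega> v \<partial>lborel) \<partial>measure_pmf D)"
    proof (rule lD.Fubini'[symmetric])
      show "(\<lambda>(k, v). f k * C k \<omega> v) \<in> borel_measurable (lborel \<Otimes>\<^sub>M measure_pmf D)"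
        using MC2[of \<omega>] by (simp add: split_beta') measurable
    qed
    also have "\<dots> \<le> (\<integral>\<^sup>+ v. c0 * G \<omega> v \<partial>measure_pmf D)"
    proof (intro nn_integral_mono)
      fix v
      show "(\<integral>\<^sup>+ k. f k * C k \<omega> v \<partial>lborel) \<le> c0 * G \<omega> v"
        unfolding f_def C_def c0_def G_def Gv_def
        by (rule ski_da[OF arrival_P1 arrival_P2 n])
    qed
    finally show "(\<integral>\<^sup>+ k. f k * H k \<omega> \<partial>lborel) \<le> (\<integral>\<^sup>+ v. c0 * G \<omega> v \<partial>measure_pmf D)" .
  qed
  also have "\<dots> = c0 * (\<integral>\<^sup>+ \<omega>. (\<integral>\<^sup>+ v. G \<omega> v \<partial>measure_pmf D) \<partial>P)"
  proof -
    have GI: "(\<lambda>\<omega>. \<integral>\<^sup>+ v. G \<omega> v \<partial>measure_pmf D) \<in> borel_measurable P"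
      using measure_pmf.borel_measurable_nn_integral_fst[OF MG] by simp
    have "(\<integral>\<^sup>+ \<omega>. (\<integral>\<^sup>+ v. c0 * G \<omega> v \<partial>measure_pmf D) \<partial>P) = (\<integral>\<^sup>+ \<omega>. c0 * (\<integral>\<^sup>+ v. G \<omega> v \<partial>measure_pmf D) \<partial>P)"
      by (intro nn_integral_cong nn_integral_cmult) simp
    also have "\<dots> = c0 * (\<integral>\<^sup>+ \<omega>. (\<integral>\<^sup>+ v. G \<omega> v \<partial>measure_pmf D) \<partial>P)"
      by (rule nn_integral_cmult[OF GI])
    finally show ?thesis .
  qed
  also have "(\<integral>\<^sup>+ \<omega>. (\<integral>\<^sup>+ v. G \<omega> v \<partial>measure_pmf D) \<partial>P) = (\<integral>\<^sup>+ v. (\<integral>\<^sup>+ \<omega>. G \<omega> v \<partial>P) \<partial>measure_pmf D)"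
  proof (rule PD.Fubini'[symmetric])
    show "(\<lambda>(\<omega>, v). G \<omega> v) \<in> borel_measurable (P \<Otimes>\<^sub>M measure_pmf D)"
      using MG by (simp add: split_beta')
  qed
  also have "\<dots> \<le> (\<integral>\<^sup>+ v. 4 * (\<Sum>s. (let t = Suc s in
        ennreal (max 0 (1 - (\<Sum>i<n. \<Sum>t'\<in>{t'\<in>{1..n}. real t' < real t - real (v i)}. x i t'))))) \<partial>measure_pmf D)"
  proof (intro nn_integral_mono)
    fix v
    show "(\<integral>\<^sup>+ \<omega>. G \<omega> v \<partial>P) \<le> 4 * (\<Sum>s. (let t = Suc s in
        ennreal (max 0 (1 - (\<Sum>i<n. \<Sum>t'\<in>{t'\<in>{1..n}. real t' < real t - real (v i)}. x i t')))))"
      unfolding G_def P_def by (rule G_integral_bound[OF n feas])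
  qed
  also have "\<dots> = 4 * cp_obj n D x"
    unfolding cp_obj_def by (rule nn_integral_cmult) simp
  finally have main: "alg_value n D x \<le> c0 * (4 * cp_obj n D x)" by (simp add: mult_left_mono)
  also have "\<dots> \<le> c0 * (4 * OPT n D)"
    using cp_le_OPT[OF n assms(3)] by (intro mult_left_mono) auto
  also have "\<dots> = ennreal (4 * exp 4 / (exp 4 - 1)) * OPT n D"
  proof -
    have Zp: "0 < exp 4 - (1::real)" by simp
    have "ennreal (4 * exp 4 / (exp 4 - 1)) = ennreal (4 * (exp 4 / (exp 4 - 1)))" by simp
    also have "\<dots> = ennreal 4 * ennreal (exp 4 / (exp 4 - 1))"
      by (rule ennreal_mult) (use Zp in auto)
    finally have "c0 * 4 = ennreal (4 * exp 4 / (exp 4 - 1))"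
      unfolding c0_def by (simp add: mult.commute)
    then show ?thesis by (simp add: mult.assoc[symmetric])
  qed
  finally show ?thesis .
qed

end
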